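(* Let $\mathsf{K}$ be a variety of Heyting algebras or a variety of implicative semilattices. Then for every $\mathbf{B}\in\mathsf{K}$ and every proper subalgebra $\mathbf{A}\leq\mathbf{B}$ there exist two distinct congruences $\theta,\phi$ of $\mathbf{B}$ with $\theta{\upharpoonright}_A=\phi{\upharpoonright}_A$. Consequently, $\mathsf{K}$ has the weak ES property.
   Context: Implicative semilattices are the $\langle\wedge,\to\rangle$-subreducts of Heyting algebras. $\theta{\upharpoonright}_A=\theta\cap(A\times A)$. A variety $\mathsf{K}$ has the weak ES property if every $\mathsf{K}$-epimorphism (homomorphism $f\colon\mathbf{A}\to\mathbf{B}$ in $\mathsf{K}$ with $g\circ f=h\circ f\Rightarrow g=h$ for all homomorphisms $g,h$ from $\mathbf{B}$ into members of $\mathsf{K}$) between finitely generated members of $\mathsf{K}$ is surjective. *)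

theory Defs
  imports Main
begin

datatype 'f trm = TVar nat | TFn 'f "'f trm list"

text \<open>An algebra: a carrier and an interpretation of every operation symbol as a
function on argument lists (only lists of the correct arity inside the carrier matter).\<close>
record ('f, 'a) alg =
  carrier :: "'a set"
  ops :: "'f \<Rightarrow> 'a list \<Rightarrow> 'a"

definition algebra :: "('f \<Rightarrow> nat) \<Rightarrow> ('f, 'a) alg \<Rightarrow> bool" where
  "algebra ar A \<longleftrightarrow>
     (\<forall>f xs. length xs = ar f \<longrightarrow> set xs \<subseteq> carrier A \<longrightarrow> ops A f xs \<in> carrier A)"

fun wf_trm :: "('f \<Rightarrow> nat) \<Rightarrow> 'f trm \<Rightarrow> bool" where
  "wf_trm ar (TVar n) = True"
| "wf_trm ar (TFn f ts) = (length ts = ar f \<and> (\<forall>t\<in>set ts. wf_trm ar t))"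

definition wf_eqs :: "('f \<Rightarrow> nat) \<Rightarrow> ('f trm \<times> 'f trm) set \<Rightarrow> bool" where
  "wf_eqs ar E \<longleftrightarrow> (\<forall>(s, t)\<in>E. wf_trm ar s \<and> wf_trm ar t)"

fun eval :: "('f, 'a) alg \<Rightarrow> (nat \<Rightarrow> 'a) \<Rightarrow> 'f trm \<Rightarrow> 'a" where
  "eval A \<rho> (TVar n) = \<rho> n"
| "eval A \<rho> (TFn f ts) = ops A f (map (eval A \<rho>) ts)"

definition satisfies :: "('f, 'a) alg \<Rightarrow> 'f trm \<times> 'f trm \<Rightarrow> bool" where
  "satisfies A e \<longleftrightarrow>
     (\<forall>\<rho>. (\<forall>n. \<rho> n \<in> carrier A) \<longrightarrow> eval A \<rho> (fst e) = eval A \<rho> (snd e))"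

definition subalg :: "('f \<Rightarrow> nat) \<Rightarrow> 'a set \<Rightarrow> ('f, 'a) alg \<Rightarrow> bool" where
  "subalg ar S B \<longleftrightarrow> S \<subseteq> carrier B \<and>
     (\<forall>f xs. length xs = ar f \<longrightarrow> set xs \<subseteq> S \<longrightarrow> ops B f xs \<in> S)"

definition congruence :: "('f \<Rightarrow> nat) \<Rightarrow> ('f, 'a) alg \<Rightarrow> ('a \<times> 'a) set \<Rightarrow> bool" where
  "congruence ar B \<theta> \<longleftrightarrow> equiv (carrier B) \<theta> \<and>
     (\<forall>f xs ys. length xs = ar f \<longrightarrow> length ys = ar f \<longrightarrow>
        list_all2 (\<lambda>x y. (x, y) \<in> \<theta>) xs ys \<longrightarrow> (ops B f xs, ops B f ys) \<in> \<theta>)"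

definition restr :: "('a \<times> 'a) set \<Rightarrow> 'a set \<Rightarrow> ('a \<times> 'a) set" where
  "restr \<theta> S = \<theta> \<inter> (S \<times> S)"

definition hom :: "('f \<Rightarrow> nat) \<Rightarrow> ('a \<Rightarrow> 'b) \<Rightarrow> ('f, 'a) alg \<Rightarrow> ('f, 'b) alg \<Rightarrow> bool" where
  "hom ar h A C \<longleftrightarrow> h ` carrier A \<subseteq> carrier C \<and>
     (\<forall>f xs. length xs = ar f \<longrightarrow> set xs \<subseteq> carrier A \<longrightarrow> h (ops A f xs) = ops C f (map h xs))"

definition Sg :: "('f \<Rightarrow> nat) \<Rightarrow> ('f, 'a) alg \<Rightarrow> 'a set \<Rightarrow> 'a set" where
  "Sg ar A X = \<Inter>{S. subalg ar S A \<and> X \<subseteq> S}"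

definition fin_gen :: "('f \<Rightarrow> nat) \<Rightarrow> ('f, 'a) alg \<Rightarrow> bool" where
  "fin_gen ar A \<longleftrightarrow> (\<exists>X. finite X \<and> X \<subseteq> carrier A \<and> Sg ar A X = carrier A)"

text \<open>K-epimorphism, where K is a class of algebras with universes in type 'c.
Homomorphisms are compared on the carrier of their domain.\<close>
definition epi :: "('f \<Rightarrow> nat) \<Rightarrow> (('f, 'c) alg \<Rightarrow> bool) \<Rightarrow> ('a \<Rightarrow> 'b)
                   \<Rightarrow> ('f, 'a) alg \<Rightarrow> ('f, 'b) alg \<Rightarrow> bool" where
  "epi ar K f A B \<longleftrightarrow> hom ar f A B \<and>
     (\<forall>(g :: 'b \<Rightarrow> 'c) h C. K C \<longrightarrow> hom ar g B C \<longrightarrow> hom ar h B C \<longrightarrow>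
        (\<forall>a\<in>carrier A. g (f a) = h (f a)) \<longrightarrow> (\<forall>b\<in>carrier B. g b = h b))"

datatype hsym = HMeet | HJoin | HImp | HBot | HTop

fun har :: "hsym \<Rightarrow> nat" where
  "har HMeet = 2" | "har HJoin = 2" | "har HImp = 2" | "har HBot = 0" | "har HTop = 0"

definition heyting_algebra :: "(hsym, 'a) alg \<Rightarrow> bool" where
  "heyting_algebra A \<longleftrightarrow> algebra har A \<and>
    (let M = (\<lambda>x y. ops A HMeet [x, y]); J = (\<lambda>x y. ops A HJoin [x, y]);
         I = (\<lambda>x y. ops A HImp [x, y]); z = ops A HBot []; u = ops A HTop [];
         le = (\<lambda>x y. M x y = x) in
     \<forall>x\<in>carrier A. \<forall>y\<in>carrier A. \<forall>w\<in>carrier A.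
        M x (M y w) = M (M x y) w \<and> J x (J y w) = J (J x y) w \<and>
        M x y = M y x \<and> J x y = J y x \<and>
        M x (J x y) = x \<and> J x (M x y) = x \<and>
        M z x = z \<and> M u x = x \<and>
        (le (M w x) y \<longleftrightarrow> le w (I x y)))"

definition HVar :: "(hsym trm \<times> hsym trm) set \<Rightarrow> (hsym, 'a) alg \<Rightarrow> bool" where
  "HVar E A \<longleftrightarrow> heyting_algebra A \<and> (\<forall>e\<in>E. satisfies A e)"

datatype isym = IMeet | IImp | ITop

fun iar :: "isym \<Rightarrow> nat" where
  "iar IMeet = 2" | "iar IImp = 2" | "iar ITop = 0"

definition implicative_semilattice :: "(isym, 'a) alg \<Rightarrow> bool" where
  "implicative_semilattice A \<longleftrightarrow> algebra iar A \<and>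
    (let M = (\<lambda>x y. ops A IMeet [x, y]); I = (\<lambda>x y. ops A IImp [x, y]);
         u = ops A ITop []; le = (\<lambda>x y. M x y = x) in
     \<forall>x\<in>carrier A. \<forall>y\<in>carrier A. \<forall>w\<in>carrier A.
        M x (M y w) = M (M x y) w \<and> M x y = M y x \<and> M x x = x \<and> M u x = x \<and>
        (le (M w x) y \<longleftrightarrow> le w (I x y)))"

definition IVar :: "(isym trm \<times> isym trm) set \<Rightarrow> (isym, 'a) alg \<Rightarrow> bool" where
  "IVar E A \<longleftrightarrow> implicative_semilattice A \<and> (\<forall>e\<in>E. satisfies A e)"

end

theory Submission
  imports Defs "HOL-Library.Countable_Set" "HOL-Library.Countable"
begin

locale slat =
  fixes A :: "'a set" and M :: "'a \<Rightarrow> 'a \<Rightarrow> 'a" and u :: 'a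
  assumes Mc: "x \<in> A \<Longrightarrow> y \<in> A \<Longrightarrow> M x y \<in> A"
  and uc: "u \<in> A"
  and assoc: "x \<in> A \<Longrightarrow> y \<in> A \<Longrightarrow> w \<in> A \<Longrightarrow> M x (M y w) = M (M x y) w"
  and comm: "x \<in> A \<Longrightarrow> y \<in> A \<Longrightarrow> M x y = M y x"
  and idem: "x \<in> A \<Longrightarrow> M x x = x"
  and top: "x \<in> A \<Longrightarrow> M u x = x"
begin
definition le where "le x y \<longleftrightarrow> M x y = x"
lemma top2: "x \<in> A \<Longrightarrow> M x u = x" using comm top uc by metis
lemma le_refl: "x \<in> A \<Longrightarrow> le x x" by (simp add: le_def idem)
lemma le_trans: "x \<in> A \<Longrightarrow> y \<in> A \<Longrightarrow> z \<in> A \<Longrightarrow> le x y \<Longrightarrow> le y z \<Longrightarrow> le x z"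
  unfolding le_def by (metis assoc)
lemma le_antisym: "x \<in> A \<Longrightarrow> y \<in> A \<Longrightarrow> le x y \<Longrightarrow> le y x \<Longrightarrow> x = y"
  unfolding le_def by (metis comm)
lemma lb1: "x \<in> A \<Longrightarrow> y \<in> A \<Longrightarrow> le (M x y) x"
  unfolding le_def by (metis assoc comm idem)
lemma lb2: "x \<in> A \<Longrightarrow> y \<in> A \<Longrightarrow> le (M x y) y"
  unfolding le_def by (metis assoc idem)
lemma glb: "x \<in> A \<Longrightarrow> y \<in> A \<Longrightarrow> z \<in> A \<Longrightarrow> le z x \<Longrightarrow> le z y \<Longrightarrow> le z (M x y)"
  unfolding le_def by (metis assoc)
lemma glb_iff: "x \<in> A \<Longrightarrow> y \<in> A \<Longrightarrow> z \<in> A \<Longrightarrow> le z (M x y) \<longleftrightarrow> le z x \<and> le z y"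
  by (meson Mc glb lb1 lb2 le_trans)
lemma le_top: "x \<in> A \<Longrightarrow> le x u" by (simp add: le_def top2)
lemma indirect: "x \<in> A \<Longrightarrow> y \<in> A \<Longrightarrow> (\<And>w. w \<in> A \<Longrightarrow> le w x \<longleftrightarrow> le w y) \<Longrightarrow> x = y"
  by (meson le_antisym le_refl)
end

locale isl = slat +
  fixes I :: "'a \<Rightarrow> 'a \<Rightarrow> 'a"
  assumes Ic: "x \<in> A \<Longrightarrow> y \<in> A \<Longrightarrow> I x y \<in> A"
  and res: "x \<in> A \<Longrightarrow> y \<in> A \<Longrightarrow> w \<in> A \<Longrightarrow> le (M w x) y \<longleftrightarrow> le w (I x y)"
begin
lemma H1: "x \<in> A \<Longrightarrow> y \<in> A \<Longrightarrow> M x (I x y) = M x y"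
proof -
  assume a: "x \<in> A" "y \<in> A"
  have i: "I x y \<in> A" "M x y \<in> A" "M x (I x y) \<in> A" using a Ic Mc by auto
  have "le (M (I x y) x) y" using res[of x y "I x y"] a i le_refl by blast
  hence "le (M x (I x y)) y" using comm[of x "I x y"] a i by simp
  hence 1: "le (M x (I x y)) (M x y)" using glb[of x y "M x (I x y)"] lb1[of x "I x y"] a i by blast
  have "le (M (M x y) x) y" using lb1[of "M x y" x] lb2[of x y] le_trans a i Mc by blast
  hence "le (M x y) (I x y)" using res[of x y "M x y"] a i by blast
  hence 2: "le (M x y) (M x (I x y))" using glb[of x "I x y" "M x y"] lb1[of x y] a i by blast
  show ?thesis using 1 2 a i le_antisym by blast
qed
lemma H2: "x \<in> A \<Longrightarrow> y \<in> A \<Longrightarrow> M y (I x y) = y"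
proof -
  assume a: "x \<in> A" "y \<in> A"
  have "le (M y x) y" using lb1[of y x] a by simp
  hence "le y (I x y)" using res[of x y y] a by simp
  thus ?thesis by (simp add: le_def)
qed
lemma H3: "x \<in> A \<Longrightarrow> y \<in> A \<Longrightarrow> z \<in> A \<Longrightarrow> I x (M y z) = M (I x y) (I x z)"
  apply (rule indirect) using Ic Mc apply auto[2]
  by (simp add: Ic Mc glb_iff res[symmetric])
lemma H4: "x \<in> A \<Longrightarrow> I x x = u"
proof -
  assume a: "x \<in> A"
  have "le u (I x x)" using res[of x x u] a uc lb2 by blast
  thus ?thesis using le_top[of "I x x"] le_antisym a Ic uc by blast
qed
lemma keyI: "x \<in> A \<Longrightarrow> z \<in> A \<Longrightarrow> c \<in> A \<Longrightarrow> M (I x z) c = M (I (M x c) (M z c)) c"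
proof (rule indirect)
  assume a: "x \<in> A" "z \<in> A" "c \<in> A"
  show "M (I x z) c \<in> A" "M (I (M x c) (M z c)) c \<in> A" using a by (auto simp: Mc Ic)
  fix w assume w: "w \<in> A"
  show "le w (M (I x z) c) = le w (M (I (M x c) (M z c)) c)"
  proof (cases "le w c")
    case True
    have "M w (M x c) = M w (M c x)" using comm a by simp
    also have "\<dots> = M (M w c) x" using assoc a w by simp
    also have "\<dots> = M w x" using True le_def by simp
    finally have e: "M w (M x c) = M w x" .
    have wx: "M w x \<in> A" using Mc a w by simp
    have "le (M w x) c" using le_trans[OF wx w _ lb1[OF w a(1)] True] a by simp
    have "le w (I x z) \<longleftrightarrow> le (M w x) z" using res a w by simp
    also have "\<dots> \<longleftrightarrow> le (M w x) (M z c)" using glb_iff[OF a(2) a(3) wx] \<open>le (M w x) c\<close> by simp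
    also have "\<dots> \<longleftrightarrow> le w (I (M x c) (M z c))" using res[of "M x c" "M z c" w] a w e Mc by simp
    finally show ?thesis using glb_iff a w Mc Ic by auto
  next
    case False
    thus ?thesis using glb_iff a w Mc Ic by auto
  qed
qed
lemma mono_I: "x \<in> A \<Longrightarrow> p \<in> A \<Longrightarrow> q \<in> A \<Longrightarrow> le p q \<Longrightarrow> le (I x p) (I x q)"
  using H3[of x p q] by (simp add: le_def)
end

lemma (in slat) isl_from_eqs:
  assumes Ic: "\<And>x y. x \<in> A \<Longrightarrow> y \<in> A \<Longrightarrow> I x y \<in> A"
  and E1: "\<And>x y. x \<in> A \<Longrightarrow> y \<in> A \<Longrightarrow> M x (I x y) = M x y"
  and E2: "\<And>x y. x \<in> A \<Longrightarrow> y \<in> A \<Longrightarrow> M y (I x y) = y"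
  and E3: "\<And>x y z. x \<in> A \<Longrightarrow> y \<in> A \<Longrightarrow> z \<in> A \<Longrightarrow> I x (M y z) = M (I x y) (I x z)"
  and E4: "\<And>x. x \<in> A \<Longrightarrow> I x x = u"
  shows "isl A M u I"
proof
  show "\<And>x y. x \<in> A \<Longrightarrow> y \<in> A \<Longrightarrow> I x y \<in> A" by fact
  fix x y w assume a: "x \<in> A" "y \<in> A" "w \<in> A"
  have mono: "le (I x p) (I x q)" if "x \<in> A" "p \<in> A" "q \<in> A" "le p q" for x p q
  proof -
    have "I x (M p q) = M (I x p) (I x q)" using E3 that by blast
    thus ?thesis using that(4) by (simp add: le_def)
  qed
  show "le (M w x) y \<longleftrightarrow> le w (I x y)"
  proof
    assume h: "le (M w x) y"
    have 1: "le w (I x w)" using E2[of x w] a le_def by simp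
    have "I x (M w x) = M (I x w) (I x x)" using E3 a by simp
    also have "\<dots> = I x w" using E4 a top2 Ic by simp
    finally have "le w (I x (M w x))" using 1 by simp
    moreover have "le (I x (M w x)) (I x y)" using mono[of x "M w x" y] h a Mc by simp
    ultimately show "le w (I x y)" using le_trans[of w "I x (M w x)" "I x y"] a Ic Mc by simp
  next
    assume h: "le w (I x y)"
    have wi: "M w (I x y) = w" using h le_def by simp
    have e1: "M (I x y) x = M x y" using E1[of x y] a comm[of "I x y" x] Ic by simp
    have "M w x = M (M w (I x y)) x" using wi by simp
    also have "\<dots> = M w (M (I x y) x)" using assoc a Ic by simp
    also have "\<dots> = M w (M x y)" using e1 by simp
    finally have e2: "M w x = M w (M x y)" .
    have e3: "M (M x y) y = M x y" using lb2 a le_def by simp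
    have "M (M w x) y = M (M w (M x y)) y" using e2 by simp
    also have "\<dots> = M w (M (M x y) y)" using assoc a Mc by simp
    also have "\<dots> = M w x" using e2 e3 by simp
    finally show "le (M w x) y" by (simp add: le_def)
  qed
qed

context slat begin
lemma Mcc: "x \<in> A \<Longrightarrow> z \<in> A \<Longrightarrow> c \<in> A \<Longrightarrow> M (M x z) c = M (M x c) (M z c)"
proof -
  assume a: "x \<in> A" "z \<in> A" "c \<in> A"
  have "M c (M z c) = M (M c z) c" using assoc a by simp
  also have "\<dots> = M (M z c) c" using comm[of c z] a by simp
  also have "\<dots> = M z (M c c)" using assoc a by simp
  also have "\<dots> = M z c" using idem a by simp
  finally have 1: "M c (M z c) = M z c" .
  have "M (M x c) (M z c) = M x (M c (M z c))" using assoc a Mc by simp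
  also have "\<dots> = M x (M z c)" using 1 by simp
  also have "\<dots> = M (M x z) c" using assoc a by simp
  finally show ?thesis by simp
qed
end

definition compat2 :: "('a \<times> 'a) set \<Rightarrow> ('a \<Rightarrow> 'a \<Rightarrow> 'a) \<Rightarrow> bool" where
  "compat2 \<psi> F \<longleftrightarrow> (\<forall>x y z w. (x,y) \<in> \<psi> \<longrightarrow> (z,w) \<in> \<psi> \<longrightarrow> (F x z, F y w) \<in> \<psi>)"

context isl begin

definition Rel :: "('a \<times> 'a) set \<Rightarrow> 'a \<Rightarrow> ('a \<times> 'a) set" where
  "Rel \<psi> c = {(x,y). x \<in> A \<and> y \<in> A \<and> (M x c, M y c) \<in> \<psi>}"
definition Phi :: "('a \<times> 'a) set \<Rightarrow> 'a set \<Rightarrow> 'a \<Rightarrow> ('a \<times> 'a) set" where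
  "Phi \<psi> S b = {(x,y). x \<in> A \<and> y \<in> A \<and> (\<exists>a\<in>S. (M a b, b) \<in> \<psi> \<and> (M x a, M y a) \<in> \<psi>)}"


definition goodc where "goodc \<psi> \<longleftrightarrow> equiv A \<psi> \<and> compat2 \<psi> M \<and> compat2 \<psi> I"

lemma eq_refl: "equiv A \<psi> \<Longrightarrow> x \<in> A \<Longrightarrow> (x,x) \<in> \<psi>"
  by (meson equiv_def refl_onD)
lemma eq_sym: "equiv A \<psi> \<Longrightarrow> (x,y) \<in> \<psi> \<Longrightarrow> (y,x) \<in> \<psi>"
  by (meson equiv_def symD)
lemma eq_trans: "equiv A \<psi> \<Longrightarrow> (x,y) \<in> \<psi> \<Longrightarrow> (y,z) \<in> \<psi> \<Longrightarrow> (x,z) \<in> \<psi>"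
  by (meson equiv_def transD)
lemma eq_sub: "equiv A \<psi> \<Longrightarrow> (x,y) \<in> \<psi> \<Longrightarrow> x \<in> A \<and> y \<in> A"
  using equiv_type by blast

lemma equivI3: "\<psi> \<subseteq> A \<times> A \<Longrightarrow> (\<And>x. x \<in> A \<Longrightarrow> (x,x) \<in> \<psi>) \<Longrightarrow> (\<And>x y. (x,y) \<in> \<psi> \<Longrightarrow> (y,x) \<in> \<psi>)
  \<Longrightarrow> (\<And>x y z. (x,y) \<in> \<psi> \<Longrightarrow> (y,z) \<in> \<psi> \<Longrightarrow> (x,z) \<in> \<psi>) \<Longrightarrow> equiv A \<psi>"
  unfolding equiv_def refl_on_def sym_def trans_def by blast

context
  fixes \<psi> assumes g: "goodc \<psi>"
begin
lemma gE: "equiv A \<psi>" using g goodc_def by blast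
lemma gM: "(x,y) \<in> \<psi> \<Longrightarrow> (z,w) \<in> \<psi> \<Longrightarrow> (M x z, M y w) \<in> \<psi>" using g unfolding goodc_def compat2_def by blast
lemma gI: "(x,y) \<in> \<psi> \<Longrightarrow> (z,w) \<in> \<psi> \<Longrightarrow> (I x z, I y w) \<in> \<psi>" using g unfolding goodc_def compat2_def by blast
lemma grefl: "x \<in> A \<Longrightarrow> (x,x) \<in> \<psi>" using eq_refl gE by blast
lemma gsym: "(x,y) \<in> \<psi> \<Longrightarrow> (y,x) \<in> \<psi>" using eq_sym gE by blast
lemma gtrans: "(x,y) \<in> \<psi> \<Longrightarrow> (y,z) \<in> \<psi> \<Longrightarrow> (x,z) \<in> \<psi>" using eq_trans gE by blast
lemma gsub: "(x,y) \<in> \<psi> \<Longrightarrow> x \<in> A \<and> y \<in> A" using eq_sub gE by blast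

lemma Rel_equiv: "c \<in> A \<Longrightarrow> equiv A (Rel \<psi> c)"
proof (rule equivI3)
  assume c: "c \<in> A"
  show "Rel \<psi> c \<subseteq> A \<times> A" unfolding Rel_def by auto
  show "(x,x) \<in> Rel \<psi> c" if "x \<in> A" for x
    unfolding Rel_def using grefl[of "M x c"] Mc[OF that c] that by simp
  show "(y,x) \<in> Rel \<psi> c" if "(x,y) \<in> Rel \<psi> c" for x y
    using that gsym unfolding Rel_def by simp
  show "(x,z) \<in> Rel \<psi> c" if "(x,y) \<in> Rel \<psi> c" "(y,z) \<in> Rel \<psi> c" for x y z
  proof -
    have "(M x c, M y c) \<in> \<psi>" "(M y c, M z c) \<in> \<psi>" "x \<in> A" "z \<in> A" using that unfolding Rel_def by auto
    thus ?thesis using gtrans unfolding Rel_def by blast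
  qed
qed

lemma Rel_M: "c \<in> A \<Longrightarrow> (x,y) \<in> Rel \<psi> c \<Longrightarrow> (z,w) \<in> Rel \<psi> c \<Longrightarrow> (M x z, M y w) \<in> Rel \<psi> c"
proof -
  assume c: "c \<in> A" and h: "(x,y) \<in> Rel \<psi> c" "(z,w) \<in> Rel \<psi> c"
  hence a: "x \<in> A" "y \<in> A" "z \<in> A" "w \<in> A" "(M x c, M y c) \<in> \<psi>" "(M z c, M w c) \<in> \<psi>"
    unfolding Rel_def by auto
  have "(M (M x c) (M z c), M (M y c) (M w c)) \<in> \<psi>" using gM a(5,6) .
  hence "(M (M x z) c, M (M y w) c) \<in> \<psi>" using Mcc a c by simp
  thus ?thesis unfolding Rel_def using a Mc by simp
qed

lemma Rel_I: "c \<in> A \<Longrightarrow> (x,y) \<in> Rel \<psi> c \<Longrightarrow> (z,w) \<in> Rel \<psi> c \<Longrightarrow> (I x z, I y w) \<in> Rel \<psi> c"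
proof -
  assume c: "c \<in> A" and h: "(x,y) \<in> Rel \<psi> c" "(z,w) \<in> Rel \<psi> c"
  hence a: "x \<in> A" "y \<in> A" "z \<in> A" "w \<in> A" "(M x c, M y c) \<in> \<psi>" "(M z c, M w c) \<in> \<psi>"
    unfolding Rel_def by auto
  have "(M (I (M x c) (M z c)) c, M (I (M y c) (M w c)) c) \<in> \<psi>"
    using gM gI a grefl c by blast
  thus ?thesis unfolding Rel_def using keyI a c Ic by auto
qed

lemma psi_Rel: "c \<in> A \<Longrightarrow> (x,y) \<in> \<psi> \<Longrightarrow> (x,y) \<in> Rel \<psi> c"
proof -
  assume c: "c \<in> A" and h: "(x,y) \<in> \<psi>"
  have "(M x c, M y c) \<in> \<psi>" using gM[OF h grefl[OF c]] .
  thus ?thesis unfolding Rel_def using gsub[OF h] by simp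
qed

lemma bu_Rel: "b \<in> A \<Longrightarrow> (b,u) \<in> Rel \<psi> b"
proof -
  assume b: "b \<in> A"
  have "M b b = b" "M u b = b" using idem top b by auto
  thus ?thesis unfolding Rel_def using grefl b uc by simp
qed

lemma Rel_weaken: "a \<in> A \<Longrightarrow> a' \<in> A \<Longrightarrow> (x,y) \<in> Rel \<psi> a \<Longrightarrow> (x,y) \<in> Rel \<psi> (M a a')"
proof -
  assume a: "a \<in> A" "a' \<in> A" and h: "(x,y) \<in> Rel \<psi> a"
  hence xy: "x \<in> A" "y \<in> A" "(M x a, M y a) \<in> \<psi>" unfolding Rel_def by auto
  have "(M (M x a) a', M (M y a) a') \<in> \<psi>" using gM xy grefl a by blast
  thus ?thesis unfolding Rel_def using xy a assoc by auto
qed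

lemma below_meet: "a \<in> A \<Longrightarrow> a' \<in> A \<Longrightarrow> b \<in> A \<Longrightarrow> (M a b, b) \<in> \<psi> \<Longrightarrow> (M a' b, b) \<in> \<psi> \<Longrightarrow> (M (M a a') b, b) \<in> \<psi>"
proof -
  assume a: "a \<in> A" "a' \<in> A" "b \<in> A" "(M a b, b) \<in> \<psi>" "(M a' b, b) \<in> \<psi>"
  have "(M a (M a' b), M a b) \<in> \<psi>" using gM a grefl by blast
  hence "(M a (M a' b), b) \<in> \<psi>" using gtrans a by blast
  thus ?thesis using assoc a by simp
qed

context
  fixes S b
  assumes S: "S \<subseteq> A" "\<And>x y. x \<in> S \<Longrightarrow> y \<in> S \<Longrightarrow> M x y \<in> S"
    "\<And>x y. x \<in> S \<Longrightarrow> y \<in> S \<Longrightarrow> I x y \<in> S" "u \<in> S" and b: "b \<in> A"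
begin

lemma Phi_alt: "(x,y) \<in> Phi \<psi> S b \<longleftrightarrow> (\<exists>a\<in>S. (M a b, b) \<in> \<psi> \<and> (x,y) \<in> Rel \<psi> a)"
  unfolding Phi_def Rel_def by auto

lemma Phi_common: "(x,y) \<in> Phi \<psi> S b \<Longrightarrow> (z,w) \<in> Phi \<psi> S b \<Longrightarrow>
   \<exists>a\<in>S. (M a b, b) \<in> \<psi> \<and> (x,y) \<in> Rel \<psi> a \<and> (z,w) \<in> Rel \<psi> a"
proof -
  assume "(x,y) \<in> Phi \<psi> S b" "(z,w) \<in> Phi \<psi> S b"
  then obtain a1 a2 where h: "a1 \<in> S" "(M a1 b, b) \<in> \<psi>" "(x,y) \<in> Rel \<psi> a1"
     "a2 \<in> S" "(M a2 b, b) \<in> \<psi>" "(z,w) \<in> Rel \<psi> a2" unfolding Phi_alt by blast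
  have a: "a1 \<in> A" "a2 \<in> A" using h S by auto
  have 1: "(x,y) \<in> Rel \<psi> (M a1 a2)" using Rel_weaken a h by blast
  have "(z,w) \<in> Rel \<psi> (M a2 a1)" using Rel_weaken a h by blast
  hence 2: "(z,w) \<in> Rel \<psi> (M a1 a2)" using comm a by simp
  show ?thesis using 1 2 h S(2) below_meet a b by blast
qed

lemma Phi_equiv: "equiv A (Phi \<psi> S b)"
proof (rule equivI3)
  show "Phi \<psi> S b \<subseteq> A \<times> A" unfolding Phi_def by auto
  show "(x,x) \<in> Phi \<psi> S b" if "x \<in> A" for x
  proof -
    have "(M u b, b) \<in> \<psi>" using top b grefl by simp
    moreover have "(x,x) \<in> Rel \<psi> u" using eq_refl[OF Rel_equiv[OF uc] that] .
    ultimately show ?thesis unfolding Phi_alt using S(4) by blast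
  qed
  show "(y,x) \<in> Phi \<psi> S b" if h: "(x,y) \<in> Phi \<psi> S b" for x y
  proof -
    obtain a where "a \<in> S" "(M a b, b) \<in> \<psi>" "(x,y) \<in> Rel \<psi> a" using h unfolding Phi_alt by blast
    moreover have "(y,x) \<in> Rel \<psi> a" using eq_sym[OF Rel_equiv] calculation(1,3) S(1) by blast
    ultimately show ?thesis unfolding Phi_alt by blast
  qed
  show "(x,z) \<in> Phi \<psi> S b" if h: "(x,y) \<in> Phi \<psi> S b" "(y,z) \<in> Phi \<psi> S b" for x y z
  proof -
    obtain a where "a \<in> S" "(M a b, b) \<in> \<psi>" "(x,y) \<in> Rel \<psi> a" "(y,z) \<in> Rel \<psi> a"
      using Phi_common[OF h] by blast
    moreover have "(x,z) \<in> Rel \<psi> a" using eq_trans[OF Rel_equiv] calculation(1,3,4) S(1) by blast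
    ultimately show ?thesis unfolding Phi_alt by blast
  qed
qed

lemma Phi_M: "(x,y) \<in> Phi \<psi> S b \<Longrightarrow> (z,w) \<in> Phi \<psi> S b \<Longrightarrow> (M x z, M y w) \<in> Phi \<psi> S b"
proof -
  assume h: "(x,y) \<in> Phi \<psi> S b" "(z,w) \<in> Phi \<psi> S b"
  obtain a where a: "a \<in> S" "(M a b, b) \<in> \<psi>" "(x,y) \<in> Rel \<psi> a" "(z,w) \<in> Rel \<psi> a"
    using Phi_common[OF h] by blast
  have "a \<in> A" using a S(1) by auto
  hence "(M x z, M y w) \<in> Rel \<psi> a" using Rel_M a(3,4) by blast
  thus ?thesis unfolding Phi_alt using a by blast
qed

lemma Phi_I: "(x,y) \<in> Phi \<psi> S b \<Longrightarrow> (z,w) \<in> Phi \<psi> S b \<Longrightarrow> (I x z, I y w) \<in> Phi \<psi> S b"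
proof -
  assume h: "(x,y) \<in> Phi \<psi> S b" "(z,w) \<in> Phi \<psi> S b"
  obtain a where a: "a \<in> S" "(M a b, b) \<in> \<psi>" "(x,y) \<in> Rel \<psi> a" "(z,w) \<in> Rel \<psi> a"
    using Phi_common[OF h] by blast
  have "a \<in> A" using a S(1) by auto
  hence "(I x z, I y w) \<in> Rel \<psi> a" using Rel_I a(3,4) by blast
  thus ?thesis unfolding Phi_alt using a by blast
qed

lemma psi_Phi: "(x,y) \<in> \<psi> \<Longrightarrow> (x,y) \<in> Phi \<psi> S b"
proof -
  assume h: "(x,y) \<in> \<psi>"
  have "(M u b, b) \<in> \<psi>" using top b grefl by simp
  moreover have "(x,y) \<in> Rel \<psi> u" using psi_Rel[OF uc h] .
  ultimately show ?thesis unfolding Phi_alt using S(4) by blast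
qed

lemma Phi_Rel: "(x,y) \<in> Phi \<psi> S b \<Longrightarrow> (x,y) \<in> Rel \<psi> b"
proof -
  assume "(x,y) \<in> Phi \<psi> S b"
  then obtain a where h: "a \<in> S" "(M a b, b) \<in> \<psi>" "x \<in> A" "y \<in> A" "(M x a, M y a) \<in> \<psi>"
    unfolding Phi_def by blast
  have a: "a \<in> A" using h S by auto
  have 1: "(M (M x a) b, M (M y a) b) \<in> \<psi>" using gM h grefl b by blast
  have 2: "(M x (M a b), M x b) \<in> \<psi>" using gM h grefl by blast
  have 3: "(M y (M a b), M y b) \<in> \<psi>" using gM h grefl by blast
  have "(M x b, M y b) \<in> \<psi>" using 1 2 3 assoc a b h gsym gtrans by metis
  thus ?thesis unfolding Rel_def using h by auto
qed

lemma Rel_Phi: "x \<in> S \<Longrightarrow> y \<in> S \<Longrightarrow> (x,y) \<in> Rel \<psi> b \<Longrightarrow> (x,y) \<in> Phi \<psi> S b"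
proof -
  assume xS: "x \<in> S" "y \<in> S" and r: "(x,y) \<in> Rel \<psi> b"
  have x: "x \<in> A" "y \<in> A" using xS S by auto
  have xy: "(M x b, M y b) \<in> \<psi>" using r unfolding Rel_def by auto
  define a where "a = M (I x y) (I y x)"
  have aS: "a \<in> S" using S xS unfolding a_def by auto
  have iA: "I x y \<in> A" "I y x \<in> A" using Ic x by auto
  have e1: "M x a = M x y"
  proof -
    have "M x a = M (M x (I x y)) (I y x)" unfolding a_def using assoc x iA by simp
    also have "\<dots> = M (M x y) (I y x)" using H1 x by simp
    also have "\<dots> = M x (M y (I y x))" using assoc x iA by simp
    also have "\<dots> = M x (M y x)" using H1 x by simp
    also have "\<dots> = M x y" using assoc idem x comm by metis
    finally show ?thesis .
  qed
  have e2: "M y a = M x y"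
  proof -
    have "M y a = M y (M (I y x) (I x y))" unfolding a_def using comm iA by simp
    also have "\<dots> = M (M y (I y x)) (I x y)" using assoc x iA by simp
    also have "\<dots> = M (M y x) (I x y)" using H1 x by simp
    also have "\<dots> = M y (M x (I x y))" using assoc x iA by simp
    also have "\<dots> = M y (M x y)" using H1 x by simp
    also have "\<dots> = M x y" using assoc idem x comm by metis
    finally show ?thesis .
  qed
  have key: "(M (I p q) b, b) \<in> \<psi>" if "p \<in> A" "q \<in> A" "(M p b, M q b) \<in> \<psi>" for p q
  proof -
    have "(I (M p b) (M q b), I (M q b) (M q b)) \<in> \<psi>" using gI that grefl Mc b by blast
    hence "(M (I (M p b) (M q b)) b, M (I (M q b) (M q b)) b) \<in> \<psi>" using gM grefl b by blast
    moreover have "M (I (M q b) (M q b)) b = b" using H4 top Mc that b by simp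
    ultimately show ?thesis using keyI that b by simp
  qed
  have k1: "(M (I x y) b, b) \<in> \<psi>" using key x xy by blast
  have k2: "(M (I y x) b, b) \<in> \<psi>" using key x xy gsym by blast
  have "(M a b, b) \<in> \<psi>" unfolding a_def using below_meet k1 k2 iA b by blast
  moreover have "(M x a, M y a) \<in> \<psi>" using e1 e2 grefl Mc x by simp
  ultimately show ?thesis unfolding Phi_def using aS x by blast
qed

lemma bu_Phi: "(b,u) \<in> Phi \<psi> S b \<Longrightarrow> \<exists>s\<in>S. (b,s) \<in> \<psi>"
proof -
  assume "(b,u) \<in> Phi \<psi> S b"
  then obtain a where h: "a \<in> S" "(M a b, b) \<in> \<psi>" "(M b a, M u a) \<in> \<psi>"
    unfolding Phi_def by blast
  have a: "a \<in> A" using h S by auto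
  have "(b, M b a) \<in> \<psi>" using h(2) comm a b gsym by metis
  hence "(b, a) \<in> \<psi>" using h(3) top a gtrans by metis
  thus ?thesis using h by blast
qed

end
end
end

locale hey = isl +
  fixes J :: "'a \<Rightarrow> 'a \<Rightarrow> 'a" and z :: 'a
  assumes Jc: "x \<in> A \<Longrightarrow> y \<in> A \<Longrightarrow> J x y \<in> A"
  and zc: "z \<in> A"
  and Jassoc: "x \<in> A \<Longrightarrow> y \<in> A \<Longrightarrow> w \<in> A \<Longrightarrow> J x (J y w) = J (J x y) w"
  and Jcomm: "x \<in> A \<Longrightarrow> y \<in> A \<Longrightarrow> J x y = J y x"
  and ab1: "x \<in> A \<Longrightarrow> y \<in> A \<Longrightarrow> M x (J x y) = x"
  and ab2: "x \<in> A \<Longrightarrow> y \<in> A \<Longrightarrow> J x (M x y) = x"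
begin
lemma ub1: "x \<in> A \<Longrightarrow> y \<in> A \<Longrightarrow> le x (J x y)" using ab1 le_def by simp
lemma ub2: "x \<in> A \<Longrightarrow> y \<in> A \<Longrightarrow> le y (J x y)" using ab1[of y x] le_def Jcomm[of x y] by simp
lemma le_J: "x \<in> A \<Longrightarrow> w \<in> A \<Longrightarrow> le x w \<Longrightarrow> J x w = w"
proof -
  assume a: "x \<in> A" "w \<in> A" "le x w"
  have "J x w = J (M x w) w" using a le_def by simp
  also have "\<dots> = J w (M w x)" using Jcomm[of "M x w" w] comm[of x w] a Mc by simp
  also have "\<dots> = w" using ab2 a by simp
  finally show ?thesis .
qed
lemma lub: "x \<in> A \<Longrightarrow> y \<in> A \<Longrightarrow> w \<in> A \<Longrightarrow> le x w \<Longrightarrow> le y w \<Longrightarrow> le (J x y) w"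
proof -
  assume a: "x \<in> A" "y \<in> A" "w \<in> A" "le x w" "le y w"
  have "J (J x y) w = J x (J y w)" using Jassoc a by simp
  also have "\<dots> = w" using le_J a by simp
  finally have "J (J x y) w = w" .
  hence "M (J x y) w = M (J x y) (J (J x y) w)" by simp
  also have "\<dots> = J x y" using ab1 a Jc by simp
  finally show ?thesis by (simp add: le_def)
qed
lemma distr: "x \<in> A \<Longrightarrow> y \<in> A \<Longrightarrow> c \<in> A \<Longrightarrow> M (J x y) c = J (M x c) (M y c)"
proof -
  assume a: "x \<in> A" "y \<in> A" "c \<in> A"
  define R where "R = J (M x c) (M y c)"
  have R: "R \<in> A" using R_def a Jc Mc by simp
  have "le (M x c) R" using ub1 a Mc R_def by simp
  hence 1: "le x (I c R)" using res[of c R x] a R comm by simp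
  have "le (M y c) R" using ub2 a Mc R_def by simp
  hence 2: "le y (I c R)" using res[of c R y] a R comm by simp
  have "le (J x y) (I c R)" using lub 1 2 a Ic R by simp
  hence 3: "le (M (J x y) c) R" using res a R Jc by simp
  have "le (M x c) (J x y)" using le_trans[of "M x c" x "J x y"] lb1 ub1 a Mc Jc by simp
  moreover have "le (M x c) c" using lb2 a by simp
  ultimately have 4: "le (M x c) (M (J x y) c)" using glb a Jc Mc by simp
  have "le (M y c) (J x y)" using le_trans[of "M y c" y "J x y"] lb1 ub2 a Mc Jc by simp
  moreover have "le (M y c) c" using lb2 a by simp
  ultimately have 5: "le (M y c) (M (J x y) c)" using glb a Jc Mc by simp
  have "le R (M (J x y) c)" using lub 4 5 a Mc Jc R_def by simp
  thus ?thesis using 3 le_antisym[of "M (J x y) c" R] R Mc Jc a unfolding R_def by simp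
qed

lemma Rel_J: "goodc \<psi> \<Longrightarrow> compat2 \<psi> J \<Longrightarrow> c \<in> A \<Longrightarrow> (x,y) \<in> Rel \<psi> c \<Longrightarrow> (x',y') \<in> Rel \<psi> c \<Longrightarrow> (J x x', J y y') \<in> Rel \<psi> c"
proof -
  assume g: "goodc \<psi>" and cj: "compat2 \<psi> J" and c: "c \<in> A" and h: "(x,y) \<in> Rel \<psi> c" "(x',y') \<in> Rel \<psi> c"
  hence a: "x \<in> A" "y \<in> A" "x' \<in> A" "y' \<in> A" "(M x c, M y c) \<in> \<psi>" "(M x' c, M y' c) \<in> \<psi>"
    unfolding Rel_def by auto
  have "(J (M x c) (M x' c), J (M y c) (M y' c)) \<in> \<psi>" using cj a(5,6) unfolding compat2_def by blast
  hence "(M (J x x') c, M (J y y') c) \<in> \<psi>" using distr a c by simp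
  thus ?thesis unfolding Rel_def using a Jc by simp
qed

lemma Phi_J: "goodc \<psi> \<Longrightarrow> compat2 \<psi> J \<Longrightarrow> S \<subseteq> A \<Longrightarrow> (\<And>x y. x \<in> S \<Longrightarrow> y \<in> S \<Longrightarrow> M x y \<in> S) \<Longrightarrow>
    (\<And>x y. x \<in> S \<Longrightarrow> y \<in> S \<Longrightarrow> I x y \<in> S) \<Longrightarrow> u \<in> S \<Longrightarrow> b \<in> A \<Longrightarrow>
   (x,y) \<in> Phi \<psi> S b \<Longrightarrow> (x',y') \<in> Phi \<psi> S b \<Longrightarrow> (J x x', J y y') \<in> Phi \<psi> S b"
proof -
  assume h: "goodc \<psi>" "compat2 \<psi> J" "S \<subseteq> A" "\<And>x y. x \<in> S \<Longrightarrow> y \<in> S \<Longrightarrow> M x y \<in> S"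
    "\<And>x y. x \<in> S \<Longrightarrow> y \<in> S \<Longrightarrow> I x y \<in> S" "u \<in> S" "b \<in> A"
    "(x,y) \<in> Phi \<psi> S b" "(x',y') \<in> Phi \<psi> S b"
  obtain a where a: "a \<in> S" "(M a b, b) \<in> \<psi>" "(x,y) \<in> Rel \<psi> a" "(x',y') \<in> Rel \<psi> a"
    using Phi_common[OF h(1,3,4,5,6,7,8,9)] by blast
  have "a \<in> A" using a h(3) by auto
  hence "(J x x', J y y') \<in> Rel \<psi> a" using Rel_J h(1,2) a(3,4) by blast
  thus ?thesis using Phi_alt[OF h(1,3,4,5,6,7)] a by blast
qed
end

definition sat :: "('a \<times> 'a) set \<Rightarrow> 'a set \<Rightarrow> 'a set" where
  "sat \<psi> S = {x. \<exists>s\<in>S. (x,s) \<in> \<psi>}"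

lemma len2: "length xs = Suc (Suc 0) \<Longrightarrow> \<exists>a b. xs = [a,b]"
  by (auto simp: length_Suc_conv)

definition "hM B x y = ops B HMeet [x,y]"
definition "hJ B x y = ops B HJoin [x,y]"
definition "hI B x y = ops B HImp [x,y]"
definition "hz B = ops B HBot []"
definition "hu B = ops B HTop []"

lemma alg_H:
  assumes "algebra har B"
  shows "x \<in> carrier B \<Longrightarrow> y \<in> carrier B \<Longrightarrow> hM B x y \<in> carrier B"
    "x \<in> carrier B \<Longrightarrow> y \<in> carrier B \<Longrightarrow> hJ B x y \<in> carrier B"
    "x \<in> carrier B \<Longrightarrow> y \<in> carrier B \<Longrightarrow> hI B x y \<in> carrier B"
    "hz B \<in> carrier B" "hu B \<in> carrier B"
proof -
  have a: "\<And>f xs. length xs = har f \<Longrightarrow> set xs \<subseteq> carrier B \<Longrightarrow> ops B f xs \<in> carrier B"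
    using assms unfolding algebra_def by blast
  show "x \<in> carrier B \<Longrightarrow> y \<in> carrier B \<Longrightarrow> hM B x y \<in> carrier B" using a[of "[x,y]" HMeet] unfolding hM_def by simp
  show "x \<in> carrier B \<Longrightarrow> y \<in> carrier B \<Longrightarrow> hJ B x y \<in> carrier B" using a[of "[x,y]" HJoin] unfolding hJ_def by simp
  show "x \<in> carrier B \<Longrightarrow> y \<in> carrier B \<Longrightarrow> hI B x y \<in> carrier B" using a[of "[x,y]" HImp] unfolding hI_def by simp
  show "hz B \<in> carrier B" using a[of "[]" HBot] unfolding hz_def by simp
  show "hu B \<in> carrier B" using a[of "[]" HTop] unfolding hu_def by simp
qed

lemma heyting_hey: "heyting_algebra B \<Longrightarrow> hey (carrier B) (hM B) (hu B) (hI B) (hJ B) (hz B)"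
proof -
  assume h: "heyting_algebra B"
  hence alg: "algebra har B" unfolding heyting_algebra_def by simp
  have ax: "\<And>x y w. x \<in> carrier B \<Longrightarrow> y \<in> carrier B \<Longrightarrow> w \<in> carrier B \<Longrightarrow>
        hM B x (hM B y w) = hM B (hM B x y) w \<and> hJ B x (hJ B y w) = hJ B (hJ B x y) w \<and>
        hM B x y = hM B y x \<and> hJ B x y = hJ B y x \<and>
        hM B x (hJ B x y) = x \<and> hJ B x (hM B x y) = x \<and>
        hM B (hz B) x = hz B \<and> hM B (hu B) x = x \<and>
        (hM B (hM B w x) y = hM B w x \<longleftrightarrow> hM B w (hI B x y) = w)"
    using h unfolding heyting_algebra_def Let_def hM_def hJ_def hI_def hz_def hu_def by blast
  note c = alg_H[OF alg]
  have as: "hM B x (hM B y w) = hM B (hM B x y) w" if "x \<in> carrier B" "y \<in> carrier B" "w \<in> carrier B" for x y w using ax[OF that] by blast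
  have jas: "hJ B x (hJ B y w) = hJ B (hJ B x y) w" if "x \<in> carrier B" "y \<in> carrier B" "w \<in> carrier B" for x y w using ax[OF that] by blast
  have co: "hM B x y = hM B y x" if "x \<in> carrier B" "y \<in> carrier B" for x y using ax[OF that that(1)] by blast
  have jco: "hJ B x y = hJ B y x" if "x \<in> carrier B" "y \<in> carrier B" for x y using ax[OF that that(1)] by blast
  have ab1: "hM B x (hJ B x y) = x" if "x \<in> carrier B" "y \<in> carrier B" for x y using ax[OF that that(1)] by blast
  have ab2: "hJ B x (hM B x y) = x" if "x \<in> carrier B" "y \<in> carrier B" for x y using ax[OF that that(1)] by blast
  have bo: "hM B (hz B) x = hz B" if "x \<in> carrier B" for x using ax[OF that that that] by blast
  have tp: "hM B (hu B) x = x" if "x \<in> carrier B" for x using ax[OF that that that] by blast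
  have rs: "(hM B (hM B w x) y = hM B w x) \<longleftrightarrow> (hM B w (hI B x y) = w)" if "x \<in> carrier B" "y \<in> carrier B" "w \<in> carrier B" for x y w using ax[OF that] by blast
  have idem: "hM B x x = x" if "x \<in> carrier B" for x
  proof -
    have "hM B x (hJ B x (hM B x x)) = x" using ab1 that c by blast
    moreover have "hJ B x (hM B x x) = x" using ab2 that by blast
    ultimately show ?thesis by simp
  qed
  interpret slat "carrier B" "hM B" "hu B"
  proof (rule slat.intro)
    show "\<And>x y. x \<in> carrier B \<Longrightarrow> y \<in> carrier B \<Longrightarrow> hM B x y \<in> carrier B" by (rule c)
    show "hu B \<in> carrier B" by (rule c)
    show "\<And>x y w. x \<in> carrier B \<Longrightarrow> y \<in> carrier B \<Longrightarrow> w \<in> carrier B \<Longrightarrow> hM B x (hM B y w) = hM B (hM B x y) w" by (rule as)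
    show "\<And>x y. x \<in> carrier B \<Longrightarrow> y \<in> carrier B \<Longrightarrow> hM B x y = hM B y x" by (rule co)
    show "\<And>x. x \<in> carrier B \<Longrightarrow> hM B x x = x" by (rule idem)
    show "\<And>x. x \<in> carrier B \<Longrightarrow> hM B (hu B) x = x" by (rule tp)
  qed
  interpret isl "carrier B" "hM B" "hu B" "hI B"
  proof (rule isl.intro)
    show "slat (carrier B) (hM B) (hu B)" ..
    show "isl_axioms (carrier B) (hM B) (hI B)"
    proof (rule isl_axioms.intro)
      show "\<And>x y. x \<in> carrier B \<Longrightarrow> y \<in> carrier B \<Longrightarrow> hI B x y \<in> carrier B" by (rule c)
      show "\<And>x y w. x \<in> carrier B \<Longrightarrow> y \<in> carrier B \<Longrightarrow> w \<in> carrier B \<Longrightarrow> le (hM B w x) y = le w (hI B x y)"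
        unfolding le_def by (rule rs)
    qed
  qed
  show ?thesis
  proof (rule hey.intro)
    show "isl (carrier B) (hM B) (hu B) (hI B)" ..
    show "hey_axioms (carrier B) (hM B) (hJ B) (hz B)"
    proof (rule hey_axioms.intro)
      show "\<And>x y. x \<in> carrier B \<Longrightarrow> y \<in> carrier B \<Longrightarrow> hJ B x y \<in> carrier B" by (rule c)
      show "hz B \<in> carrier B" by (rule c)
      show "\<And>x y w. x \<in> carrier B \<Longrightarrow> y \<in> carrier B \<Longrightarrow> w \<in> carrier B \<Longrightarrow> hJ B x (hJ B y w) = hJ B (hJ B x y) w" by (rule jas)
      show "\<And>x y. x \<in> carrier B \<Longrightarrow> y \<in> carrier B \<Longrightarrow> hJ B x y = hJ B y x" by (rule jco)
      show "\<And>x y. x \<in> carrier B \<Longrightarrow> y \<in> carrier B \<Longrightarrow> hM B x (hJ B x y) = x" by (rule ab1)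
      show "\<And>x y. x \<in> carrier B \<Longrightarrow> y \<in> carrier B \<Longrightarrow> hJ B x (hM B x y) = x" by (rule ab2)
    qed
  qed
qed

definition "iM B x y = ops B IMeet [x,y]"
definition "iI B x y = ops B IImp [x,y]"
definition "iu B = ops B ITop []"

lemma alg_I:
  assumes "algebra iar B"
  shows "x \<in> carrier B \<Longrightarrow> y \<in> carrier B \<Longrightarrow> iM B x y \<in> carrier B"
    "x \<in> carrier B \<Longrightarrow> y \<in> carrier B \<Longrightarrow> iI B x y \<in> carrier B"
    "iu B \<in> carrier B"
proof -
  have a: "\<And>f xs. length xs = iar f \<Longrightarrow> set xs \<subseteq> carrier B \<Longrightarrow> ops B f xs \<in> carrier B"
    using assms unfolding algebra_def by blast
  show "x \<in> carrier B \<Longrightarrow> y \<in> carrier B \<Longrightarrow> iM B x y \<in> carrier B" using a[of "[x,y]" IMeet] unfolding iM_def by simp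
  show "x \<in> carrier B \<Longrightarrow> y \<in> carrier B \<Longrightarrow> iI B x y \<in> carrier B" using a[of "[x,y]" IImp] unfolding iI_def by simp
  show "iu B \<in> carrier B" using a[of "[]" ITop] unfolding iu_def by simp
qed

lemma isl_isl: "implicative_semilattice B \<Longrightarrow> isl (carrier B) (iM B) (iu B) (iI B)"
proof -
  assume h: "implicative_semilattice B"
  hence alg: "algebra iar B" unfolding implicative_semilattice_def by simp
  have ax: "\<And>x y w. x \<in> carrier B \<Longrightarrow> y \<in> carrier B \<Longrightarrow> w \<in> carrier B \<Longrightarrow>
        iM B x (iM B y w) = iM B (iM B x y) w \<and> iM B x y = iM B y x \<and> iM B x x = x \<and> iM B (iu B) x = x \<and>
        (iM B (iM B w x) y = iM B w x \<longleftrightarrow> iM B w (iI B x y) = w)"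
    using h unfolding implicative_semilattice_def Let_def iM_def iI_def iu_def by blast
  note c = alg_I[OF alg]
  have as: "iM B x (iM B y w) = iM B (iM B x y) w" if "x \<in> carrier B" "y \<in> carrier B" "w \<in> carrier B" for x y w using ax[OF that] by blast
  have co: "iM B x y = iM B y x" if "x \<in> carrier B" "y \<in> carrier B" for x y using ax[OF that that(1)] by blast
  have idem: "iM B x x = x" if "x \<in> carrier B" for x using ax[OF that that that] by blast
  have tp: "iM B (iu B) x = x" if "x \<in> carrier B" for x using ax[OF that that that] by blast
  have rs: "(iM B (iM B w x) y = iM B w x) \<longleftrightarrow> (iM B w (iI B x y) = w)" if "x \<in> carrier B" "y \<in> carrier B" "w \<in> carrier B" for x y w using ax[OF that] by blast
  interpret slat "carrier B" "iM B" "iu B"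
  proof (rule slat.intro)
    show "\<And>x y. x \<in> carrier B \<Longrightarrow> y \<in> carrier B \<Longrightarrow> iM B x y \<in> carrier B" by (rule c)
    show "iu B \<in> carrier B" by (rule c)
    show "\<And>x y w. x \<in> carrier B \<Longrightarrow> y \<in> carrier B \<Longrightarrow> w \<in> carrier B \<Longrightarrow> iM B x (iM B y w) = iM B (iM B x y) w" by (rule as)
    show "\<And>x y. x \<in> carrier B \<Longrightarrow> y \<in> carrier B \<Longrightarrow> iM B x y = iM B y x" by (rule co)
    show "\<And>x. x \<in> carrier B \<Longrightarrow> iM B x x = x" by (rule idem)
    show "\<And>x. x \<in> carrier B \<Longrightarrow> iM B (iu B) x = x" by (rule tp)
  qed
  show ?thesis
  proof (rule isl.intro)
    show "slat (carrier B) (iM B) (iu B)" ..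
    show "isl_axioms (carrier B) (iM B) (iI B)"
    proof (rule isl_axioms.intro)
      show "\<And>x y. x \<in> carrier B \<Longrightarrow> y \<in> carrier B \<Longrightarrow> iI B x y \<in> carrier B" by (rule c)
      show "\<And>x y w. x \<in> carrier B \<Longrightarrow> y \<in> carrier B \<Longrightarrow> w \<in> carrier B \<Longrightarrow> le (iM B w x) y = le w (iI B x y)"
        unfolding le_def by (rule rs)
    qed
  qed
qed

lemma cong_H:
  assumes "algebra har B"
  shows "congruence har B \<theta> \<longleftrightarrow> equiv (carrier B) \<theta> \<and> compat2 \<theta> (hM B) \<and> compat2 \<theta> (hJ B) \<and> compat2 \<theta> (hI B)"
proof
  assume c: "congruence har B \<theta>"
  have "compat2 \<theta> (\<lambda>x y. ops B f [x,y])" if "har f = 2" for f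
    unfolding compat2_def using c that unfolding congruence_def by auto
  thus "equiv (carrier B) \<theta> \<and> compat2 \<theta> (hM B) \<and> compat2 \<theta> (hJ B) \<and> compat2 \<theta> (hI B)"
    using c unfolding congruence_def hM_def hJ_def hI_def by (auto simp del: har.simps) (auto)
next
  assume c: "equiv (carrier B) \<theta> \<and> compat2 \<theta> (hM B) \<and> compat2 \<theta> (hJ B) \<and> compat2 \<theta> (hI B)"
  show "congruence har B \<theta>" unfolding congruence_def
  proof (intro conjI allI impI)
    show "equiv (carrier B) \<theta>" using c by simp
    fix f xs ys assume l: "length xs = har f" "length ys = har f" "list_all2 (\<lambda>x y. (x, y) \<in> \<theta>) xs ys"
    show "(ops B f xs, ops B f ys) \<in> \<theta>"
    proof (cases f)
      case HBot
      hence "xs = []" "ys = []" using l by auto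
      thus ?thesis using alg_H[OF assms] c HBot unfolding hz_def by (simp add: equiv_def refl_on_def)
    next
      case HTop
      hence "xs = []" "ys = []" using l by auto
      thus ?thesis using alg_H[OF assms] c HTop unfolding hu_def by (simp add: equiv_def refl_on_def)
    next
      case HMeet
      then obtain a b c' d where "xs = [a,b]" "ys = [c',d]" using l len2 by (metis har.simps(1) numeral_2_eq_2)
      thus ?thesis using l c HMeet unfolding compat2_def hM_def by auto
    next
      case HJoin
      then obtain a b c' d where "xs = [a,b]" "ys = [c',d]" using l len2 by (metis har.simps(2) numeral_2_eq_2)
      thus ?thesis using l c HJoin unfolding compat2_def hJ_def by auto
    next
      case HImp
      then obtain a b c' d where "xs = [a,b]" "ys = [c',d]" using l len2 by (metis har.simps(3) numeral_2_eq_2)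
      thus ?thesis using l c HImp unfolding compat2_def hI_def by auto
    qed
  qed
qed

lemma cong_I:
  assumes "algebra iar B"
  shows "congruence iar B \<theta> \<longleftrightarrow> equiv (carrier B) \<theta> \<and> compat2 \<theta> (iM B) \<and> compat2 \<theta> (iI B)"
proof
  assume c: "congruence iar B \<theta>"
  have "compat2 \<theta> (\<lambda>x y. ops B f [x,y])" if "iar f = 2" for f
    unfolding compat2_def using c that unfolding congruence_def by auto
  thus "equiv (carrier B) \<theta> \<and> compat2 \<theta> (iM B) \<and> compat2 \<theta> (iI B)"
    using c unfolding congruence_def iM_def iI_def by (auto simp del: iar.simps) (auto)
next
  assume c: "equiv (carrier B) \<theta> \<and> compat2 \<theta> (iM B) \<and> compat2 \<theta> (iI B)"
  show "congruence iar B \<theta>" unfolding congruence_def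
  proof (intro conjI allI impI)
    show "equiv (carrier B) \<theta>" using c by simp
    fix f xs ys assume l: "length xs = iar f" "length ys = iar f" "list_all2 (\<lambda>x y. (x, y) \<in> \<theta>) xs ys"
    show "(ops B f xs, ops B f ys) \<in> \<theta>"
    proof (cases f)
      case ITop
      hence "xs = []" "ys = []" using l by auto
      thus ?thesis using alg_I[OF assms] c ITop unfolding iu_def by (simp add: equiv_def refl_on_def)
    next
      case IMeet
      then obtain a b c' d where "xs = [a,b]" "ys = [c',d]" using l len2 by (metis iar.simps(1) numeral_2_eq_2)
      thus ?thesis using l c IMeet unfolding compat2_def iM_def by auto
    next
      case IImp
      then obtain a b c' d where "xs = [a,b]" "ys = [c',d]" using l len2 by (metis iar.simps(2) numeral_2_eq_2)
      thus ?thesis using l c IImp unfolding compat2_def iI_def by auto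
    qed
  qed
qed

lemma sat_sub: "equiv C \<psi> \<Longrightarrow> sat \<psi> S \<subseteq> C"
  unfolding sat_def using equiv_type by blast

lemma part1_H:
  assumes hA: "heyting_algebra B" and cg: "congruence har B \<psi>" and sub: "subalg har S B"
    and ns: "sat \<psi> S \<noteq> carrier B"
  shows "\<exists>\<Theta> \<Phi>. congruence har B \<Theta> \<and> congruence har B \<Phi> \<and> \<psi> \<subseteq> \<Theta> \<and> \<psi> \<subseteq> \<Phi> \<and> \<Theta> \<noteq> \<Phi> \<and> restr \<Theta> S = restr \<Phi> S"
proof -
  interpret hey "carrier B" "hM B" "hu B" "hI B" "hJ B" "hz B" using heyting_hey[OF hA] .
  have alg: "algebra har B" using hA heyting_algebra_def by blast
  have c: "equiv (carrier B) \<psi>" "compat2 \<psi> (hM B)" "compat2 \<psi> (hJ B)" "compat2 \<psi> (hI B)"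
    using cg cong_H[OF alg] by auto
  have g: "goodc \<psi>" unfolding goodc_def using c by blast
  obtain b where b: "b \<in> carrier B" "b \<notin> sat \<psi> S" using ns sat_sub[OF c(1)] by blast
  have sa: "\<And>f xs. length xs = har f \<Longrightarrow> set xs \<subseteq> S \<Longrightarrow> ops B f xs \<in> S" and S0: "S \<subseteq> carrier B"
    using sub unfolding subalg_def by blast+
  have SM: "\<And>x y. x \<in> S \<Longrightarrow> y \<in> S \<Longrightarrow> hM B x y \<in> S" using sa[of "[_,_]" HMeet] unfolding hM_def by simp
  have SI: "\<And>x y. x \<in> S \<Longrightarrow> y \<in> S \<Longrightarrow> hI B x y \<in> S" using sa[of "[_,_]" HImp] unfolding hI_def by simp
  have Su: "hu B \<in> S" using sa[of "[]" HTop] unfolding hu_def by simp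
  note Sc = S0 SM SI Su
  define \<Theta> where "\<Theta> = Rel \<psi> b"
  define \<Phi> where "\<Phi> = Phi \<psi> S b"
  have c\<Theta>: "congruence har B \<Theta>"
    unfolding cong_H[OF alg] \<Theta>_def compat2_def
    using Rel_equiv[OF g b(1)] Rel_M[OF g b(1)] Rel_I[OF g b(1)] Rel_J[OF g c(3) b(1)] by blast
  have c\<Phi>: "congruence har B \<Phi>"
    unfolding cong_H[OF alg] \<Phi>_def compat2_def
    using Phi_equiv[OF g Sc b(1)] Phi_M[OF g Sc b(1)] Phi_I[OF g Sc b(1)] Phi_J[OF g c(3) Sc b(1)] by blast
  have s1: "\<psi> \<subseteq> \<Theta>" unfolding \<Theta>_def using psi_Rel[OF g b(1)] by auto
  have s2: "\<psi> \<subseteq> \<Phi>" unfolding \<Phi>_def using psi_Phi[OF g Sc b(1)] by auto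
  have "(b, hu B) \<in> \<Theta>" unfolding \<Theta>_def using bu_Rel[OF g b(1)] .
  moreover have "(b, hu B) \<notin> \<Phi>" unfolding \<Phi>_def using bu_Phi[OF g Sc b(1)] b(2) unfolding sat_def by blast
  ultimately have ne: "\<Theta> \<noteq> \<Phi>" by blast
  have "restr \<Theta> S = restr \<Phi> S"
    unfolding restr_def \<Theta>_def \<Phi>_def using Rel_Phi[OF g Sc b(1)] Phi_Rel[OF g Sc b(1)] by auto
  thus ?thesis using c\<Theta> c\<Phi> s1 s2 ne by blast
qed

lemma part1_I:
  assumes hA: "implicative_semilattice B" and cg: "congruence iar B \<psi>" and sub: "subalg iar S B"
    and ns: "sat \<psi> S \<noteq> carrier B"
  shows "\<exists>\<Theta> \<Phi>. congruence iar B \<Theta> \<and> congruence iar B \<Phi> \<and> \<psi> \<subseteq> \<Theta> \<and> \<psi> \<subseteq> \<Phi> \<and> \<Theta> \<noteq> \<Phi> \<and> restr \<Theta> S = restr \<Phi> S"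
proof -
  interpret isl "carrier B" "iM B" "iu B" "iI B" using isl_isl[OF hA] .
  have alg: "algebra iar B" using hA implicative_semilattice_def by blast
  have c: "equiv (carrier B) \<psi>" "compat2 \<psi> (iM B)" "compat2 \<psi> (iI B)"
    using cg cong_I[OF alg] by auto
  have g: "goodc \<psi>" unfolding goodc_def using c by blast
  obtain b where b: "b \<in> carrier B" "b \<notin> sat \<psi> S" using ns sat_sub[OF c(1)] by blast
  have sa: "\<And>f xs. length xs = iar f \<Longrightarrow> set xs \<subseteq> S \<Longrightarrow> ops B f xs \<in> S" and S0: "S \<subseteq> carrier B"
    using sub unfolding subalg_def by blast+
  have SM: "\<And>x y. x \<in> S \<Longrightarrow> y \<in> S \<Longrightarrow> iM B x y \<in> S" using sa[of "[_,_]" IMeet] unfolding iM_def by simp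
  have SI: "\<And>x y. x \<in> S \<Longrightarrow> y \<in> S \<Longrightarrow> iI B x y \<in> S" using sa[of "[_,_]" IImp] unfolding iI_def by simp
  have Su: "iu B \<in> S" using sa[of "[]" ITop] unfolding iu_def by simp
  note Sc = S0 SM SI Su
  define \<Theta> where "\<Theta> = Rel \<psi> b"
  define \<Phi> where "\<Phi> = Phi \<psi> S b"
  have c\<Theta>: "congruence iar B \<Theta>"
    unfolding cong_I[OF alg] \<Theta>_def compat2_def
    using Rel_equiv[OF g b(1)] Rel_M[OF g b(1)] Rel_I[OF g b(1)] by blast
  have c\<Phi>: "congruence iar B \<Phi>"
    unfolding cong_I[OF alg] \<Phi>_def compat2_def
    using Phi_equiv[OF g Sc b(1)] Phi_M[OF g Sc b(1)] Phi_I[OF g Sc b(1)] by blast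
  have s1: "\<psi> \<subseteq> \<Theta>" unfolding \<Theta>_def using psi_Rel[OF g b(1)] by auto
  have s2: "\<psi> \<subseteq> \<Phi>" unfolding \<Phi>_def using psi_Phi[OF g Sc b(1)] by auto
  have "(b, iu B) \<in> \<Theta>" unfolding \<Theta>_def using bu_Rel[OF g b(1)] .
  moreover have "(b, iu B) \<notin> \<Phi>" unfolding \<Phi>_def using bu_Phi[OF g Sc b(1)] b(2) unfolding sat_def by blast
  ultimately have ne: "\<Theta> \<noteq> \<Phi>" by blast
  have "restr \<Theta> S = restr \<Phi> S"
    unfolding restr_def \<Theta>_def \<Phi>_def using Rel_Phi[OF g Sc b(1)] Phi_Rel[OF g Sc b(1)] by auto
  thus ?thesis using c\<Theta> c\<Phi> s1 s2 ne by blast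
qed

instance trm :: (countable) countable by countable_datatype

lemma list_all2_map_self: "(\<And>x. x \<in> set xs \<Longrightarrow> P x (g x)) \<Longrightarrow> list_all2 P xs (map g xs)"
  by (induction xs) auto

lemma list_all2_map_both: "(\<And>x. x \<in> set xs \<Longrightarrow> P (g x) (h x)) \<Longrightarrow> list_all2 P (map g xs) (map h xs)"
  by (induction xs) auto

lemma list_all2_Id: "list_all2 (\<lambda>x y. (x,y) \<in> Id_on C) xs ys \<Longrightarrow> xs = ys \<and> set xs \<subseteq> C"
  by (induction rule: list_all2_induct) auto

lemma list_all2_set1: "list_all2 (\<lambda>x y. (x,y) \<in> r) xs ys \<Longrightarrow> r \<subseteq> C \<times> C \<Longrightarrow> set xs \<subseteq> C \<and> set ys \<subseteq> C"
  by (induction rule: list_all2_induct) auto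

lemma Sg_sub: "subalg ar T B \<Longrightarrow> X \<subseteq> T \<Longrightarrow> Sg ar B X \<subseteq> T"
  unfolding Sg_def by blast

lemma cong_equiv: "congruence ar B \<psi> \<Longrightarrow> equiv (carrier B) \<psi>"
  unfolding congruence_def by blast

lemma cong_ops: "congruence ar B \<psi> \<Longrightarrow> length xs = ar f \<Longrightarrow> length ys = ar f \<Longrightarrow>
   list_all2 (\<lambda>x y. (x, y) \<in> \<psi>) xs ys \<Longrightarrow> (ops B f xs, ops B f ys) \<in> \<psi>"
  unfolding congruence_def by blast

lemma alg_ops: "algebra ar B \<Longrightarrow> length xs = ar f \<Longrightarrow> set xs \<subseteq> carrier B \<Longrightarrow> ops B f xs \<in> carrier B"
  unfolding algebra_def by blast

lemma sat_subalg:
  assumes alg: "algebra ar B" and c: "congruence ar B \<psi>" and S: "subalg ar S B"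
  shows "subalg ar (sat \<psi> S) B"
  unfolding subalg_def
proof (intro conjI allI impI)
  show "sat \<psi> S \<subseteq> carrier B" using sat_sub cong_equiv[OF c] by blast
  fix f xs assume l: "length xs = ar f" "set xs \<subseteq> sat \<psi> S"
  define g where "g x = (SOME s. s \<in> S \<and> (x,s) \<in> \<psi>)" for x
  have g: "g x \<in> S \<and> (x, g x) \<in> \<psi>" if "x \<in> set xs" for x
  proof -
    have "\<exists>s. s \<in> S \<and> (x,s) \<in> \<psi>" using l that unfolding sat_def by blast
    thus ?thesis unfolding g_def by (rule someI_ex)
  qed
  have "(ops B f xs, ops B f (map g xs)) \<in> \<psi>"
    using cong_ops[OF c] l list_all2_map_self[of xs "\<lambda>x y. (x,y) \<in> \<psi>" g] g by simp
  moreover have "ops B f (map g xs) \<in> S"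
  proof -
    have "length (map g xs) = ar f" "set (map g xs) \<subseteq> S" using l g by auto
    thus ?thesis using S unfolding subalg_def by blast
  qed
  ultimately show "ops B f xs \<in> sat \<psi> S" unfolding sat_def by blast
qed

lemma equiv_Id_on: "equiv C (Id_on C)"
  unfolding equiv_def refl_on_def sym_def trans_def Id_on_def by blast

lemma Id_cong: assumes alg: "algebra ar B" shows "congruence ar B (Id_on (carrier B))"
proof -
  have "(ops B f xs, ops B f ys) \<in> Id_on (carrier B)"
    if h: "length xs = ar f" "length ys = ar f" "list_all2 (\<lambda>x y. (x, y) \<in> Id_on (carrier B)) xs ys" for f xs ys
  proof -
    have e: "xs = ys" "set xs \<subseteq> carrier B" using list_all2_Id[OF h(3)] by auto
    have "ops B f xs \<in> carrier B" using alg_ops[OF alg h(1) e(2)] .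
    hence "(ops B f xs, ops B f xs) \<in> Id_on (carrier B)" by (rule Id_onI)
    thus ?thesis using e(1) by simp
  qed
  thus ?thesis unfolding congruence_def using equiv_Id_on by blast
qed

lemma sat_Id: "S \<subseteq> C \<Longrightarrow> sat (Id_on C) S = S"
  unfolding sat_def by auto

lemma sat_mono: "\<psi> \<subseteq> \<psi>' \<Longrightarrow> sat \<psi> S \<subseteq> sat \<psi>' S"
  unfolding sat_def by blast

lemma chain_list:
  assumes ch: "\<And>a b. a \<in> Cs \<Longrightarrow> b \<in> Cs \<Longrightarrow> a \<subseteq> b \<or> b \<subseteq> a" and ne: "Cs \<noteq> {}"
  shows "list_all2 (\<lambda>x y. (x,y) \<in> \<Union>Cs) xs ys \<Longrightarrow> \<exists>\<psi>\<in>Cs. list_all2 (\<lambda>x y. (x,y) \<in> \<psi>) xs ys"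
proof (induction rule: list_all2_induct)
  case Nil thus ?case using ne by auto
next
  case (Cons x xs y ys)
  then obtain \<psi>1 \<psi>2 where h: "\<psi>1 \<in> Cs" "(x,y) \<in> \<psi>1" "\<psi>2 \<in> Cs" "list_all2 (\<lambda>x y. (x,y) \<in> \<psi>2) xs ys" by blast
  show ?case
  proof (cases "\<psi>1 \<subseteq> \<psi>2")
    case True
    hence "(x,y) \<in> \<psi>2" using h(2) by blast
    hence "list_all2 (\<lambda>x y. (x,y) \<in> \<psi>2) (x#xs) (y#ys)" using h(4) by simp
    thus ?thesis using h(3) by blast
  next
    case False
    hence s: "\<psi>2 \<subseteq> \<psi>1" using ch h by blast
    have "list_all2 (\<lambda>x y. (x,y) \<in> \<psi>1) xs ys"
      by (rule list_all2_mono[OF h(4)]) (use s in blast)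
    hence "list_all2 (\<lambda>x y. (x,y) \<in> \<psi>1) (x#xs) (y#ys)" using h(2) by simp
    thus ?thesis using h(1) by blast
  qed
qed

lemma chain_cong:
  assumes ch: "\<And>a b. a \<in> Cs \<Longrightarrow> b \<in> Cs \<Longrightarrow> a \<subseteq> b \<or> b \<subseteq> a" and ne: "Cs \<noteq> {}"
  and cs: "\<And>\<psi>. \<psi> \<in> Cs \<Longrightarrow> congruence ar B \<psi>"
  shows "congruence ar B (\<Union>Cs)"
  unfolding congruence_def
proof (intro conjI allI impI)
  have eq: "equiv (carrier B) \<psi>" if "\<psi> \<in> Cs" for \<psi> using cs[OF that] cong_equiv by blast
  obtain \<psi>0 where p0: "\<psi>0 \<in> Cs" using ne by blast
  show "equiv (carrier B) (\<Union>Cs)"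
    unfolding equiv_def refl_on_def sym_def trans_def
  proof (intro conjI allI impI ballI)
    show "\<Union>Cs \<subseteq> carrier B \<times> carrier B" using eq equiv_type by blast
    show "(x,x) \<in> \<Union>Cs" if "x \<in> carrier B" for x
    proof -
      have "(x,x) \<in> \<psi>0" using eq[OF p0] that unfolding equiv_def refl_on_def by blast
      thus ?thesis using p0 by blast
    qed
    show "(y,x) \<in> \<Union>Cs" if h: "(x,y) \<in> \<Union>Cs" for x y
    proof -
      obtain a where a: "a \<in> Cs" "(x,y) \<in> a" using h by blast
      have "(y,x) \<in> a" using eq[OF a(1)] a(2) unfolding equiv_def sym_def by blast
      thus ?thesis using a by blast
    qed
    show "(x,z) \<in> \<Union>Cs" if h: "(x,y) \<in> \<Union>Cs" "(y,z) \<in> \<Union>Cs" for x y z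
    proof -
      obtain a b where ab: "a \<in> Cs" "b \<in> Cs" "(x,y) \<in> a" "(y,z) \<in> b" using h by blast
      show ?thesis
      proof (cases "a \<subseteq> b")
        case True
        hence "(x,z) \<in> b" using ab eq[OF ab(2)] unfolding equiv_def trans_def by blast
        thus ?thesis using ab by blast
      next
        case False
        hence "b \<subseteq> a" using ch ab by blast
        hence "(x,z) \<in> a" using ab eq[OF ab(1)] unfolding equiv_def trans_def by blast
        thus ?thesis using ab by blast
      qed
    qed
  qed
  fix f xs ys assume l: "length xs = ar f" "length ys = ar f" "list_all2 (\<lambda>x y. (x, y) \<in> \<Union>Cs) xs ys"
  from chain_list[OF ch ne l(3)] obtain \<psi> where p: "\<psi> \<in> Cs" "list_all2 (\<lambda>x y. (x,y) \<in> \<psi>) xs ys" ..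
  have "(ops B f xs, ops B f ys) \<in> \<psi>" using cong_ops[OF cs[OF p(1)] l(1) l(2) p(2)] .
  thus "(ops B f xs, ops B f ys) \<in> \<Union>Cs" using p(1) by blast
qed

lemma finite_chain_sat:
  assumes ch: "\<And>a b. a \<in> Cs \<Longrightarrow> b \<in> Cs \<Longrightarrow> a \<subseteq> b \<or> b \<subseteq> a" and ne: "Cs \<noteq> {}"
  shows "finite X \<Longrightarrow> X \<subseteq> sat (\<Union>Cs) S \<Longrightarrow> \<exists>\<psi>\<in>Cs. X \<subseteq> sat \<psi> S"
proof (induction rule: finite_induct)
  case empty thus ?case using ne by blast
next
  case (insert x F)
  then obtain \<psi>1 where h1: "\<psi>1 \<in> Cs" "F \<subseteq> sat \<psi>1 S" by blast
  obtain s \<psi>2 where h2: "s \<in> S" "\<psi>2 \<in> Cs" "(x,s) \<in> \<psi>2" using insert.prems unfolding sat_def by blast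
  have x2: "x \<in> sat \<psi>2 S" using h2 unfolding sat_def by blast
  show ?case
  proof (cases "\<psi>1 \<subseteq> \<psi>2")
    case True
    thus ?thesis using h1 h2 x2 sat_mono[OF True, of S] by blast
  next
    case False
    hence "\<psi>2 \<subseteq> \<psi>1" using ch h1 h2 by blast
    thus ?thesis using h1 x2 sat_mono[of \<psi>2 \<psi>1 S] by blast
  qed
qed

lemma zorn_cong:
  assumes alg: "algebra ar B" and fg: "fin_gen ar B" and S: "subalg ar S B" and ne: "S \<noteq> carrier B"
  shows "\<exists>\<psi>. congruence ar B \<psi> \<and> sat \<psi> S \<noteq> carrier B \<and>
     (\<forall>\<psi>'. congruence ar B \<psi>' \<and> \<psi> \<subseteq> \<psi>' \<and> \<psi>' \<noteq> \<psi> \<longrightarrow> sat \<psi>' S = carrier B)"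
proof -
  define F where "F = {\<psi>. congruence ar B \<psi> \<and> sat \<psi> S \<noteq> carrier B}"
  have S0: "S \<subseteq> carrier B" using S unfolding subalg_def by blast
  have "sat (Id_on (carrier B)) S \<noteq> carrier B" using sat_Id[OF S0] ne by simp
  hence "Id_on (carrier B) \<in> F" unfolding F_def using Id_cong[OF alg] by blast
  hence Fne: "F \<noteq> {}" by blast
  obtain X where X: "finite X" "X \<subseteq> carrier B" "Sg ar B X = carrier B" using fg unfolding fin_gen_def by blast
  have "\<Union>Cs \<in> F" if Cne: "Cs \<noteq> {}" and cha: "subset.chain F Cs" for Cs
  proof -
    have sub: "Cs \<subseteq> F" and ch: "\<And>a b. a \<in> Cs \<Longrightarrow> b \<in> Cs \<Longrightarrow> a \<subseteq> b \<or> b \<subseteq> a"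
      using cha unfolding subset.chain_def by auto
    have cs: "\<And>\<psi>. \<psi> \<in> Cs \<Longrightarrow> congruence ar B \<psi>" using sub unfolding F_def by blast
    have cU: "congruence ar B (\<Union>Cs)" using chain_cong[OF ch Cne cs] .
    have "sat (\<Union>Cs) S \<noteq> carrier B"
    proof
      assume full: "sat (\<Union>Cs) S = carrier B"
      obtain \<psi> where p: "\<psi> \<in> Cs" "X \<subseteq> sat \<psi> S" using finite_chain_sat[OF ch Cne X(1)] full X(2) by blast
      have c\<psi>: "congruence ar B \<psi>" using cs p(1) .
      have "Sg ar B X \<subseteq> sat \<psi> S" using Sg_sub[OF sat_subalg[OF alg c\<psi> S] p(2)] .
      hence "sat \<psi> S = carrier B" using X(3) sat_sub[OF cong_equiv[OF c\<psi>]] by blast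
      moreover have "\<psi> \<in> F" using p sub by blast
      ultimately show False unfolding F_def by blast
    qed
    thus ?thesis using cU unfolding F_def by blast
  qed
  then obtain \<psi> where "\<psi> \<in> F" "\<forall>X\<in>F. \<psi> \<subseteq> X \<longrightarrow> X = \<psi>" using subset_Zorn_nonempty[OF Fne] by blast
  thus ?thesis unfolding F_def by blast
qed

lemma eval_carrier: "algebra ar B \<Longrightarrow> (\<And>n. \<rho> n \<in> carrier B) \<Longrightarrow> wf_trm ar t \<Longrightarrow> eval B \<rho> t \<in> carrier B"
proof (induction t)
  case (TVar n) thus ?case by simp
next
  case (TFn f ts)
  have "set (map (eval B \<rho>) ts) \<subseteq> carrier B" using TFn by auto
  thus ?case using TFn alg_ops by fastforce
qed

lemma fin_gen_countable:
  fixes B :: "('f::countable, 'b) alg"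
  assumes alg: "algebra ar B" and fg: "fin_gen ar B"
  shows "countable (carrier B)"
proof (cases "carrier B = {}")
  case True thus ?thesis by simp
next
  case False
  then obtain c0 where c0: "c0 \<in> carrier B" by blast
  obtain X where X: "finite X" "X \<subseteq> carrier B" "Sg ar B X = carrier B" using fg unfolding fin_gen_def by blast
  obtain xl where xl: "set xl = X" using finite_list[OF X(1)] by blast
  define \<rho> where "\<rho> n = (if n < length xl then xl ! n else c0)" for n
  have \<rho>: "\<rho> n \<in> carrier B" for n using X xl c0 unfolding \<rho>_def by auto
  define V where "V = eval B \<rho> ` {t. wf_trm ar t}"
  have "subalg ar V B" unfolding subalg_def
  proof (intro conjI allI impI)
    have ec: "eval B \<rho> t \<in> carrier B" if "wf_trm ar t" for t
      by (rule eval_carrier[OF alg _ that]) (rule \<rho>)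
    show "V \<subseteq> carrier B" unfolding V_def using ec by blast
    fix f xs assume l: "length xs = ar f" "set xs \<subseteq> V"
    define g where "g x = (SOME t. wf_trm ar t \<and> eval B \<rho> t = x)" for x
    have g: "wf_trm ar (g x) \<and> eval B \<rho> (g x) = x" if "x \<in> set xs" for x
    proof -
      have "\<exists>t. wf_trm ar t \<and> eval B \<rho> t = x" using l that unfolding V_def by blast
      thus ?thesis unfolding g_def by (rule someI_ex)
    qed
    have "map (eval B \<rho>) (map g xs) = xs" using g by (induction xs) auto
    hence "eval B \<rho> (TFn f (map g xs)) = ops B f xs" by simp
    moreover have "wf_trm ar (TFn f (map g xs))" using g l by auto
    ultimately show "ops B f xs \<in> V" unfolding V_def by (metis (mono_tags, lifting) image_eqI mem_Collect_eq)
  qed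
  moreover have "X \<subseteq> V"
  proof
    fix x assume "x \<in> X"
    then obtain n where "n < length xl" "xl ! n = x" using xl by (metis in_set_conv_nth)
    hence "eval B \<rho> (TVar n) = x" unfolding \<rho>_def by simp
    moreover have "wf_trm ar (TVar n)" by simp
    ultimately show "x \<in> V" unfolding V_def by (metis image_eqI mem_Collect_eq)
  qed
  ultimately have "carrier B \<subseteq> V" using Sg_sub X(3) by metis
  moreover have "countable V" unfolding V_def by (rule countable_image) simp
  ultimately show ?thesis using countable_subset by blast
qed

definition img :: "('f,'b) alg \<Rightarrow> ('b \<Rightarrow> 'c) \<Rightarrow> ('f,'c) alg" where
  "img B \<kappa> = \<lparr>carrier = \<kappa> ` carrier B,
     ops = (\<lambda>f ys. \<kappa> (ops B f (map (\<lambda>y. SOME x. x \<in> carrier B \<and> \<kappa> x = y) ys)))\<rparr>"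

definition rep :: "('f,'b) alg \<Rightarrow> ('b \<Rightarrow> 'c) \<Rightarrow> 'c \<Rightarrow> 'b" where
  "rep B \<kappa> y = (SOME x. x \<in> carrier B \<and> \<kappa> x = y)"

lemma rep: "y \<in> \<kappa> ` carrier B \<Longrightarrow> rep B \<kappa> y \<in> carrier B \<and> \<kappa> (rep B \<kappa> y) = y"
  unfolding rep_def by (rule someI_ex) blast

lemma img_carrier[simp]: "carrier (img B \<kappa>) = \<kappa> ` carrier B" unfolding img_def by simp
lemma img_ops: "ops (img B \<kappa>) f ys = \<kappa> (ops B f (map (rep B \<kappa>) ys))" unfolding img_def rep_def by simp

lemma hom_img_gen:
  assumes alg: "algebra ar B" and c: "congruence ar B \<Phi>"
  and ker: "\<And>x y. x \<in> carrier B \<Longrightarrow> y \<in> carrier B \<Longrightarrow> \<kappa> x = \<kappa> y \<longleftrightarrow> (x,y) \<in> \<Phi>"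
  and \<tau>c: "\<And>x. x \<in> carrier B \<Longrightarrow> \<tau> x \<in> carrier B"
  and \<tau>o: "\<And>f xs. length xs = ar f \<Longrightarrow> set xs \<subseteq> carrier B \<Longrightarrow> (ops B f (map \<tau> xs), \<tau> (ops B f xs)) \<in> \<Phi>"
  shows "hom ar (\<lambda>x. \<kappa> (\<tau> x)) B (img B \<kappa>)"
  unfolding hom_def
proof (intro conjI allI impI)
  show "(\<lambda>x. \<kappa> (\<tau> x)) ` carrier B \<subseteq> carrier (img B \<kappa>)" using \<tau>c by auto
  fix f xs assume l: "length xs = ar f" "set xs \<subseteq> carrier B"
  have eqv: "equiv (carrier B) \<Phi>" using cong_equiv[OF c] .
  have r: "(rep B \<kappa> (\<kappa> (\<tau> x)), \<tau> x) \<in> \<Phi>" if "x \<in> set xs" for x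
  proof -
    have tx: "\<tau> x \<in> carrier B" using \<tau>c l that by blast
    hence "\<kappa> (\<tau> x) \<in> \<kappa> ` carrier B" by blast
    hence "rep B \<kappa> (\<kappa> (\<tau> x)) \<in> carrier B \<and> \<kappa> (rep B \<kappa> (\<kappa> (\<tau> x))) = \<kappa> (\<tau> x)" by (rule rep)
    thus ?thesis using ker tx by blast
  qed
  have "list_all2 (\<lambda>x y. (x,y) \<in> \<Phi>) (map (\<lambda>x. rep B \<kappa> (\<kappa> (\<tau> x))) xs) (map \<tau> xs)"
    by (rule list_all2_map_both) (rule r)
  hence 1: "(ops B f (map (\<lambda>x. rep B \<kappa> (\<kappa> (\<tau> x))) xs), ops B f (map \<tau> xs)) \<in> \<Phi>"
    using cong_ops[OF c] l by simp
  have 2: "(ops B f (map \<tau> xs), \<tau> (ops B f xs)) \<in> \<Phi>" using \<tau>o l by blast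
  have 3: "(ops B f (map (\<lambda>x. rep B \<kappa> (\<kappa> (\<tau> x))) xs), \<tau> (ops B f xs)) \<in> \<Phi>"
    using 1 2 eqv unfolding equiv_def trans_def by blast
  have "\<kappa> (ops B f (map (\<lambda>x. rep B \<kappa> (\<kappa> (\<tau> x))) xs)) = \<kappa> (\<tau> (ops B f xs))"
    using 3 ker eqv equiv_type by blast
  moreover have "map (rep B \<kappa>) (map (\<lambda>x. \<kappa> (\<tau> x)) xs) = map (\<lambda>x. rep B \<kappa> (\<kappa> (\<tau> x))) xs" by simp
  ultimately show "\<kappa> (\<tau> (ops B f xs)) = ops (img B \<kappa>) f (map (\<lambda>x. \<kappa> (\<tau> x)) xs)"
    unfolding img_ops by (simp add: comp_def)
qed

lemma hom_img:
  assumes alg: "algebra ar B" and c: "congruence ar B \<Phi>"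
  and ker: "\<And>x y. x \<in> carrier B \<Longrightarrow> y \<in> carrier B \<Longrightarrow> \<kappa> x = \<kappa> y \<longleftrightarrow> (x,y) \<in> \<Phi>"
  shows "hom ar \<kappa> B (img B \<kappa>)"
proof -
  have "hom ar (\<lambda>x. \<kappa> (id x)) B (img B \<kappa>)"
  proof (rule hom_img_gen[OF alg c ker])
    show "\<And>x. x \<in> carrier B \<Longrightarrow> id x \<in> carrier B" by simp
    fix f xs assume l: "length xs = ar f" "set xs \<subseteq> carrier B"
    have "ops B f xs \<in> carrier B" using alg_ops[OF alg l] .
    thus "(ops B f (map id xs), id (ops B f xs)) \<in> \<Phi>"
      using cong_equiv[OF c] unfolding equiv_def refl_on_def by simp
  qed
  thus ?thesis by simp
qed

lemma eval_hom:
  assumes h: "hom ar \<kappa> B C" and alg: "algebra ar B" and \<rho>: "\<And>n. \<rho> n \<in> carrier B"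
  shows "wf_trm ar t \<Longrightarrow> eval C (\<lambda>n. \<kappa> (\<rho> n)) t = \<kappa> (eval B \<rho> t)"
proof (induction t)
  case (TVar n) thus ?case by simp
next
  case (TFn f ts)
  have l: "length (map (eval B \<rho>) ts) = ar f" using TFn.prems by simp
  have s: "set (map (eval B \<rho>) ts) \<subseteq> carrier B" using TFn.prems eval_carrier[OF alg \<rho>] by auto
  have "map (eval C (\<lambda>n. \<kappa> (\<rho> n))) ts = map (\<lambda>t. \<kappa> (eval B \<rho> t)) ts"
    by (rule map_cong) (use TFn in auto)
  hence "map (eval C (\<lambda>n. \<kappa> (\<rho> n))) ts = map \<kappa> (map (eval B \<rho>) ts)" by simp
  hence "eval C (\<lambda>n. \<kappa> (\<rho> n)) (TFn f ts) = ops C f (map \<kappa> (map (eval B \<rho>) ts))" by (simp only: eval.simps)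
  also have "\<dots> = \<kappa> (ops B f (map (eval B \<rho>) ts))" using h l s unfolding hom_def by metis
  finally show ?case by simp
qed

lemma sat_surj:
  assumes alg: "algebra ar B" and h: "hom ar \<kappa> B C" and su: "\<kappa> ` carrier B = carrier C"
  and wf: "wf_trm ar (fst e)" "wf_trm ar (snd e)" and s: "satisfies B e"
  shows "satisfies C e"
  unfolding satisfies_def
proof (intro allI impI)
  fix \<rho>' :: "nat \<Rightarrow> _" assume \<rho>': "\<forall>n. \<rho>' n \<in> carrier C"
  define \<rho> where "\<rho> n = (SOME x. x \<in> carrier B \<and> \<kappa> x = \<rho>' n)" for n :: nat
  have r: "\<rho> n \<in> carrier B \<and> \<kappa> (\<rho> n) = \<rho>' n" for n
  proof -
    have "\<exists>x. x \<in> carrier B \<and> \<kappa> x = \<rho>' n" using \<rho>' su by (metis imageE)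
    thus ?thesis unfolding \<rho>_def by (rule someI_ex)
  qed
  have r1: "\<And>n. \<rho> n \<in> carrier B" using r by blast
  have e: "(\<lambda>n. \<kappa> (\<rho> n)) = \<rho>'" using r by auto
  have "eval B \<rho> (fst e) = eval B \<rho> (snd e)" using s r1 unfolding satisfies_def by blast
  then show "eval C \<rho>' (fst e) = eval C \<rho>' (snd e)"
  proof -
    have e1: "eval C (\<lambda>n. \<kappa> (\<rho> n)) (fst e) = \<kappa> (eval B \<rho> (fst e))"
      by (rule eval_hom[OF h alg _ wf(1)]) (rule r1)
    have e2: "eval C (\<lambda>n. \<kappa> (\<rho> n)) (snd e) = \<kappa> (eval B \<rho> (snd e))"
      by (rule eval_hom[OF h alg _ wf(2)]) (rule r1)
    show ?thesis using e1 e2 e \<open>eval B \<rho> (fst e) = eval B \<rho> (snd e)\<close> by simp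
  qed
qed

lemma alg_surj:
  assumes alg: "algebra ar B" and h: "hom ar \<kappa> B C" and su: "\<kappa> ` carrier B = carrier C"
  shows "algebra ar C"
  unfolding algebra_def
proof (intro allI impI)
  fix f ys assume l: "length ys = ar f" "set ys \<subseteq> carrier C"
  define r where "r y = (SOME x. x \<in> carrier B \<and> \<kappa> x = y)" for y
  have rr: "r y \<in> carrier B \<and> \<kappa> (r y) = y" if "y \<in> carrier C" for y
  proof -
    have "\<exists>x. x \<in> carrier B \<and> \<kappa> x = y" using that su by (metis imageE)
    thus ?thesis unfolding r_def by (rule someI_ex)
  qed
  have m: "map \<kappa> (map r ys) = ys" using rr l(2) by (induction ys) auto
  have l2: "length (map r ys) = ar f" "set (map r ys) \<subseteq> carrier B" using l rr by auto
  have "\<kappa> (ops B f (map r ys)) = ops C f ys" using h l2 m unfolding hom_def by metis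
  moreover have "\<kappa> (ops B f (map r ys)) \<in> carrier C" using alg_ops[OF alg l2] su by blast
  ultimately show "ops C f ys \<in> carrier C" by simp
qed

lemma esym: "equiv C r \<Longrightarrow> (x,y) \<in> r \<Longrightarrow> (y,x) \<in> r" unfolding equiv_def sym_def by blast
lemma etrans: "equiv C r \<Longrightarrow> (x,y) \<in> r \<Longrightarrow> (y,z) \<in> r \<Longrightarrow> (x,z) \<in> r" unfolding equiv_def trans_def by blast
lemma erefl: "equiv C r \<Longrightarrow> x \<in> C \<Longrightarrow> (x,x) \<in> r" unfolding equiv_def refl_on_def by blast
lemma esub: "equiv C r \<Longrightarrow> (x,y) \<in> r \<Longrightarrow> x \<in> C \<and> y \<in> C" using equiv_type by blast

lemma hom_image_subalg:
  assumes algA: "algebra ar A" and h: "hom ar f A B"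
  shows "subalg ar (f ` carrier A) B"
  unfolding subalg_def
proof (intro conjI allI impI)
  show "f ` carrier A \<subseteq> carrier B" using h unfolding hom_def by blast
  fix g ys assume l: "length ys = ar g" "set ys \<subseteq> f ` carrier A"
  define r where "r y = (SOME x. x \<in> carrier A \<and> f x = y)" for y
  have rr: "r y \<in> carrier A \<and> f (r y) = y" if "y \<in> set ys" for y
  proof -
    have "\<exists>x. x \<in> carrier A \<and> f x = y" using that l by blast
    thus ?thesis unfolding r_def by (rule someI_ex)
  qed
  have m: "map f (map r ys) = ys" using rr by (induction ys) auto
  have l2: "length (map r ys) = ar g" "set (map r ys) \<subseteq> carrier A" using l rr by auto
  have "f (ops A g (map r ys)) = ops B g ys" using h l2 m unfolding hom_def by metis
  moreover have "ops A g (map r ys) \<in> carrier A" using alg_ops[OF algA l2] .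
  ultimately show "ops B g ys \<in> f ` carrier A" by (metis image_eqI)
qed

lemma ES_core:
  fixes B :: "('f,'b) alg" and A :: "('f,'a) alg" and K :: "('f,'c) alg \<Rightarrow> bool"
  assumes alg: "algebra ar B" and cnt: "countable (carrier B)" and inf: "infinite (UNIV :: 'c set)"
  and Kc: "\<forall>(C::('f,'c) alg) \<kappa>. hom ar \<kappa> B C \<longrightarrow> \<kappa> ` carrier B = carrier C \<longrightarrow> K C"
  and ep: "epi ar K f A B"
  and S: "subalg ar S B" and Sd: "f ` carrier A = S"
  and cT: "congruence ar B \<Theta>" and cP: "congruence ar B \<Phi>" and ne: "\<Theta> \<noteq> \<Phi>"
  and r: "restr \<Theta> S = restr \<Phi> S" and full: "sat \<Theta> S = carrier B"
  shows False
proof -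
  have eT: "equiv (carrier B) \<Theta>" and eP: "equiv (carrier B) \<Phi>" using cT cP cong_equiv by blast+
  have S0: "S \<subseteq> carrier B" using S unfolding subalg_def by blast
  obtain e :: "nat \<Rightarrow> 'c" where e: "inj e" using infinite_countable_subset[OF inf] by blast
  define Q where "Q = carrier B // \<Phi>"
  have "Q = (\<lambda>x. \<Phi> `` {x}) ` carrier B" unfolding Q_def quotient_def by blast
  hence "countable Q" using cnt by simp
  then obtain g :: "'b set \<Rightarrow> nat" where g: "inj_on g Q" unfolding countable_def by blast
  define \<kappa> where "\<kappa> x = e (g (\<Phi> `` {x}))" for x
  have ker: "\<kappa> x = \<kappa> y \<longleftrightarrow> (x,y) \<in> \<Phi>" if "x \<in> carrier B" "y \<in> carrier B" for x y
  proof -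
    have q: "\<Phi> `` {x} \<in> Q" "\<Phi> `` {y} \<in> Q" unfolding Q_def using that by (auto intro: quotientI)
    have "\<kappa> x = \<kappa> y \<longleftrightarrow> g (\<Phi> `` {x}) = g (\<Phi> `` {y})" unfolding \<kappa>_def using e by (simp add: inj_eq)
    also have "\<dots> \<longleftrightarrow> \<Phi> `` {x} = \<Phi> `` {y}" by (rule inj_on_eq_iff[OF g q])
    also have "\<dots> \<longleftrightarrow> (x,y) \<in> \<Phi>" using equiv_class_eq_iff[OF eP] that by blast
    finally show ?thesis .
  qed
  define C where "C = img B \<kappa>"
  have h1: "hom ar \<kappa> B C" unfolding C_def by (rule hom_img[OF alg cP ker])
  have KC: "K C" using Kc h1 unfolding C_def by simp
  define \<sigma> where "\<sigma> x = (SOME s. s \<in> S \<and> (x,s) \<in> \<Theta>)" for x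
  have \<sigma>: "\<sigma> x \<in> S \<and> (x, \<sigma> x) \<in> \<Theta>" if "x \<in> carrier B" for x
  proof -
    have "\<exists>s. s \<in> S \<and> (x,s) \<in> \<Theta>" using that full unfolding sat_def by blast
    thus ?thesis unfolding \<sigma>_def by (rule someI_ex)
  qed
  have rT: "(a,b) \<in> \<Phi>" if "a \<in> S" "b \<in> S" "(a,b) \<in> \<Theta>" for a b
    using r that unfolding restr_def by blast
  have rP: "(a,b) \<in> \<Theta>" if "a \<in> S" "b \<in> S" "(a,b) \<in> \<Phi>" for a b
    using r that unfolding restr_def by blast
  have h2: "hom ar (\<lambda>x. \<kappa> (\<sigma> x)) B C" unfolding C_def
  proof (rule hom_img_gen[OF alg cP ker])
    show "\<And>x. x \<in> carrier B \<Longrightarrow> \<sigma> x \<in> carrier B" using \<sigma> S0 by blast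
    fix f xs assume l: "length xs = ar f" "set xs \<subseteq> carrier B"
    have "list_all2 (\<lambda>x y. (x,y) \<in> \<Theta>) xs (map \<sigma> xs)"
      by (rule list_all2_map_self) (use \<sigma> l in blast)
    hence 1: "(ops B f xs, ops B f (map \<sigma> xs)) \<in> \<Theta>" using cong_ops[OF cT] l by simp
    have oc: "ops B f xs \<in> carrier B" using alg_ops[OF alg l] .
    have 2: "(ops B f xs, \<sigma> (ops B f xs)) \<in> \<Theta>" using \<sigma>[OF oc] by blast
    have 3: "(ops B f (map \<sigma> xs), \<sigma> (ops B f xs)) \<in> \<Theta>" using esym[OF eT 1] 2 etrans[OF eT] by blast
    have "length (map \<sigma> xs) = ar f" "set (map \<sigma> xs) \<subseteq> S" using l \<sigma> by auto
    hence 4: "ops B f (map \<sigma> xs) \<in> S" using S unfolding subalg_def by blast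
    show "(ops B f (map \<sigma> xs), \<sigma> (ops B f xs)) \<in> \<Phi>" using rT[OF 4 _ 3] \<sigma>[OF oc] by blast
  qed
  have agree: "\<forall>a\<in>carrier A. \<kappa> (f a) = \<kappa> (\<sigma> (f a))"
  proof
    fix a assume "a \<in> carrier A"
    hence fa: "f a \<in> S" using Sd by blast
    hence "(f a, \<sigma> (f a)) \<in> \<Phi>" using rT \<sigma> S0 by blast
    thus "\<kappa> (f a) = \<kappa> (\<sigma> (f a))" using ker fa \<sigma> S0 by blast
  qed
  have all: "\<forall>b\<in>carrier B. \<kappa> b = \<kappa> (\<sigma> b)"
    using ep KC h1 h2 agree unfolding epi_def by blast
  have "\<Theta> = \<Phi>"
  proof (intro equalityI subsetI)
    fix p assume p: "p \<in> \<Theta>"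
    obtain x y where xy: "p = (x,y)" by (cases p)
    have c: "x \<in> carrier B" "y \<in> carrier B" using esub[OF eT] p xy by auto
    have "(\<sigma> x, x) \<in> \<Theta>" "(y, \<sigma> y) \<in> \<Theta>" using \<sigma> c esym[OF eT] by blast+
    hence "(\<sigma> x, \<sigma> y) \<in> \<Theta>" using p xy etrans[OF eT] by blast
    hence "(\<sigma> x, \<sigma> y) \<in> \<Phi>" using rT \<sigma> c by blast
    hence "\<kappa> (\<sigma> x) = \<kappa> (\<sigma> y)" using ker \<sigma> c S0 by blast
    hence "\<kappa> x = \<kappa> y" using all c by simp
    thus "p \<in> \<Phi>" using ker c xy by blast
  next
    fix p assume p: "p \<in> \<Phi>"
    obtain x y where xy: "p = (x,y)" by (cases p)
    have c: "x \<in> carrier B" "y \<in> carrier B" using esub[OF eP] p xy by auto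
    have "\<kappa> x = \<kappa> y" using ker c p xy by blast
    hence "\<kappa> (\<sigma> x) = \<kappa> (\<sigma> y)" using all c by simp
    hence "(\<sigma> x, \<sigma> y) \<in> \<Phi>" using ker \<sigma> c S0 by blast
    hence "(\<sigma> x, \<sigma> y) \<in> \<Theta>" using rP \<sigma> c by blast
    moreover have "(x, \<sigma> x) \<in> \<Theta>" "(\<sigma> y, y) \<in> \<Theta>" using \<sigma> c esym[OF eT] by blast+
    ultimately show "p \<in> \<Theta>" using xy etrans[OF eT] by blast
  qed
  thus False using ne by simp
qed

lemma ES_generic:
  fixes B :: "('f::countable,'b) alg" and A :: "('f,'a) alg" and K :: "('f,'c) alg \<Rightarrow> bool"
  assumes algA: "algebra ar A" and alg: "algebra ar B" and fg: "fin_gen ar B" and inf: "infinite (UNIV :: 'c set)"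
  and Kc: "\<And>(C::('f,'c) alg) \<kappa>. hom ar \<kappa> B C \<Longrightarrow> \<kappa> ` carrier B = carrier C \<Longrightarrow> K C"
  and ep: "epi ar K f A B"
  and p1: "\<And>\<psi> S. congruence ar B \<psi> \<Longrightarrow> subalg ar S B \<Longrightarrow> sat \<psi> S \<noteq> carrier B \<Longrightarrow>
     \<exists>\<Theta> \<Phi>. congruence ar B \<Theta> \<and> congruence ar B \<Phi> \<and> \<psi> \<subseteq> \<Theta> \<and> \<psi> \<subseteq> \<Phi> \<and> \<Theta> \<noteq> \<Phi> \<and> restr \<Theta> S = restr \<Phi> S"
  shows "f ` carrier A = carrier B"
proof (rule ccontr)
  assume nS: "f ` carrier A \<noteq> carrier B"
  define S where "S = f ` carrier A"
  have hf: "hom ar f A B" using ep unfolding epi_def by blast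
  have S: "subalg ar S B" unfolding S_def by (rule hom_image_subalg[OF algA hf])
  have cnt: "countable (carrier B)" by (rule fin_gen_countable[OF alg fg])
  obtain \<psi> where \<psi>: "congruence ar B \<psi>" "sat \<psi> S \<noteq> carrier B"
     "\<forall>\<psi>'. congruence ar B \<psi>' \<and> \<psi> \<subseteq> \<psi>' \<and> \<psi>' \<noteq> \<psi> \<longrightarrow> sat \<psi>' S = carrier B"
    using zorn_cong[OF alg fg S] nS unfolding S_def by blast
  have Kc': "\<forall>(C::('f,'c) alg) \<kappa>. hom ar \<kappa> B C \<longrightarrow> \<kappa> ` carrier B = carrier C \<longrightarrow> K C" using Kc by blast
  obtain \<Theta> \<Phi> where tp: "congruence ar B \<Theta>" "congruence ar B \<Phi>" "\<psi> \<subseteq> \<Theta>" "\<psi> \<subseteq> \<Phi>" "\<Theta> \<noteq> \<Phi>" "restr \<Theta> S = restr \<Phi> S"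
    using p1[OF \<psi>(1) S \<psi>(2)] by blast
  show False
  proof (cases "\<Theta> = \<psi>")
    case False
    hence "sat \<Theta> S = carrier B" using \<psi>(3) tp by blast
    thus False using ES_core[OF alg cnt inf Kc' ep S S_def[symmetric] tp(1) tp(2) tp(5) tp(6)] by blast
  next
    case True
    hence "\<Phi> \<noteq> \<psi>" using tp(5) by blast
    hence "sat \<Phi> S = carrier B" using \<psi>(3) tp by blast
    thus False using ES_core[OF alg cnt inf Kc' ep S S_def[symmetric] tp(2) tp(1) tp(5)[symmetric] tp(6)[symmetric]] by blast
  qed
qed

definition "vx = (TVar 0 :: 'f trm)"
definition "vy = (TVar 1 :: 'f trm)"
definition "vw = (TVar 2 :: 'f trm)"
definition "hm a b = TFn HMeet [a,b]"
definition "hj a b = TFn HJoin [a,b]"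
definition "hi a b = TFn HImp [a,b]"
definition "hbot = TFn HBot []"
definition "htop = TFn HTop []"

definition HEQ :: "(hsym trm \<times> hsym trm) set" where
  "HEQ = {(hm vx (hm vy vw), hm (hm vx vy) vw), (hj vx (hj vy vw), hj (hj vx vy) vw),
          (hm vx vy, hm vy vx), (hj vx vy, hj vy vx), (hm vx (hj vx vy), vx), (hj vx (hm vx vy), vx),
          (hm hbot vx, hbot), (hm htop vx, vx), (hm vx (hi vx vy), hm vx vy), (hm vy (hi vx vy), vy),
          (hi vx (hm vy vw), hm (hi vx vy) (hi vx vw)), (hi vx vx, htop)}"

lemma HEQ_wf: "wf_eqs har HEQ"
  unfolding wf_eqs_def HEQ_def vx_def vy_def vw_def hm_def hj_def hi_def hbot_def htop_def by auto

definition "\<rho>3 x y w = (\<lambda>n::nat. if n = 0 then x else if n = 1 then y else w)"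

lemma heq_conj:
  "(\<forall>e\<in>HEQ. eval B \<rho> (fst e) = eval B \<rho> (snd e)) \<longleftrightarrow>
   (let x = \<rho> 0; y = \<rho> 1; w = \<rho> 2 in
    hM B x (hM B y w) = hM B (hM B x y) w \<and> hJ B x (hJ B y w) = hJ B (hJ B x y) w \<and>
    hM B x y = hM B y x \<and> hJ B x y = hJ B y x \<and> hM B x (hJ B x y) = x \<and> hJ B x (hM B x y) = x \<and>
    hM B (hz B) x = hz B \<and> hM B (hu B) x = x \<and> hM B x (hI B x y) = hM B x y \<and> hM B y (hI B x y) = y \<and>
    hI B x (hM B y w) = hM B (hI B x y) (hI B x w) \<and> hI B x x = hu B)"
  unfolding HEQ_def vx_def vy_def vw_def hm_def hj_def hi_def hbot_def htop_def
    hM_def hJ_def hI_def hz_def hu_def Let_def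
  by (simp only: ball_simps insert_iff fst_conv snd_conv eval.simps list.map simp_thms)

lemma heyting_eqs:
  "heyting_algebra B \<longleftrightarrow> algebra har B \<and> (\<forall>e\<in>HEQ. satisfies B e)"
proof
  assume h: "heyting_algebra B"
  interpret hey "carrier B" "hM B" "hu B" "hI B" "hJ B" "hz B" using heyting_hey[OF h] .
  have alg: "algebra har B" using h unfolding heyting_algebra_def by blast
  have bot: "hM B (hz B) x = hz B" if "x \<in> carrier B" for x
    using h that unfolding heyting_algebra_def Let_def hM_def hz_def by blast
  have "satisfies B e" if "e \<in> HEQ" for e
    unfolding satisfies_def
  proof (intro allI impI)
    fix \<rho> :: "nat \<Rightarrow> _" assume \<rho>: "\<forall>n. \<rho> n \<in> carrier B"
    have x: "\<rho> 0 \<in> carrier B" "\<rho> 1 \<in> carrier B" "\<rho> 2 \<in> carrier B" using \<rho> by auto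
    have "\<forall>e\<in>HEQ. eval B \<rho> (fst e) = eval B \<rho> (snd e)"
      unfolding heq_conj Let_def
      using assoc[OF x] Jassoc[OF x] comm[OF x(1,2)] Jcomm[OF x(1,2)] ab1[OF x(1,2)] ab2[OF x(1,2)]
        bot[OF x(1)] top[OF x(1)] H1[OF x(1,2)] H2[OF x(1,2)] H3[OF x] H4[OF x(1)]
      by (intro conjI) (assumption | simp)+
    thus "eval B \<rho> (fst e) = eval B \<rho> (snd e)" using that by blast
  qed
  thus "algebra har B \<and> (\<forall>e\<in>HEQ. satisfies B e)" using alg by blast
next
  assume h: "algebra har B \<and> (\<forall>e\<in>HEQ. satisfies B e)"
  have alg: "algebra har B" using h by blast
  note c = alg_H[OF alg]
  have all: "let x = x; y = y; w = w in
    hM B x (hM B y w) = hM B (hM B x y) w \<and> hJ B x (hJ B y w) = hJ B (hJ B x y) w \<and>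
    hM B x y = hM B y x \<and> hJ B x y = hJ B y x \<and> hM B x (hJ B x y) = x \<and> hJ B x (hM B x y) = x \<and>
    hM B (hz B) x = hz B \<and> hM B (hu B) x = x \<and> hM B x (hI B x y) = hM B x y \<and> hM B y (hI B x y) = y \<and>
    hI B x (hM B y w) = hM B (hI B x y) (hI B x w) \<and> hI B x x = hu B"
    if xyw: "x \<in> carrier B" "y \<in> carrier B" "w \<in> carrier B" for x y w
  proof -
    have r: "\<forall>n. \<rho>3 x y w n \<in> carrier B" unfolding \<rho>3_def using xyw by auto
    have "\<forall>e\<in>HEQ. eval B (\<rho>3 x y w) (fst e) = eval B (\<rho>3 x y w) (snd e)"
      using h r unfolding satisfies_def by blast
    note q = heq_conj[THEN iffD1, OF this]
    have v: "\<rho>3 x y w 0 = x" "\<rho>3 x y w 1 = y" "\<rho>3 x y w 2 = w" unfolding \<rho>3_def by auto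
    show ?thesis using q unfolding Let_def v .
  qed
  have as: "hM B x (hM B y w) = hM B (hM B x y) w" if "x \<in> carrier B" "y \<in> carrier B" "w \<in> carrier B" for x y w using all[OF that] unfolding Let_def by blast
  have jas: "hJ B x (hJ B y w) = hJ B (hJ B x y) w" if "x \<in> carrier B" "y \<in> carrier B" "w \<in> carrier B" for x y w using all[OF that] unfolding Let_def by blast
  have co: "hM B x y = hM B y x" if "x \<in> carrier B" "y \<in> carrier B" for x y using all[OF that that(1)] unfolding Let_def by blast
  have jco: "hJ B x y = hJ B y x" if "x \<in> carrier B" "y \<in> carrier B" for x y using all[OF that that(1)] unfolding Let_def by blast
  have ab1: "hM B x (hJ B x y) = x" if "x \<in> carrier B" "y \<in> carrier B" for x y using all[OF that that(1)] unfolding Let_def by blast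
  have ab2: "hJ B x (hM B x y) = x" if "x \<in> carrier B" "y \<in> carrier B" for x y using all[OF that that(1)] unfolding Let_def by blast
  have bo: "hM B (hz B) x = hz B" if "x \<in> carrier B" for x using all[OF that that that] unfolding Let_def by blast
  have tp: "hM B (hu B) x = x" if "x \<in> carrier B" for x using all[OF that that that] unfolding Let_def by blast
  have E1: "hM B x (hI B x y) = hM B x y" if "x \<in> carrier B" "y \<in> carrier B" for x y using all[OF that that(1)] unfolding Let_def by blast
  have E2: "hM B y (hI B x y) = y" if "x \<in> carrier B" "y \<in> carrier B" for x y using all[OF that that(1)] unfolding Let_def by blast
  have E3: "hI B x (hM B y w) = hM B (hI B x y) (hI B x w)" if "x \<in> carrier B" "y \<in> carrier B" "w \<in> carrier B" for x y w using all[OF that] unfolding Let_def by blast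
  have E4: "hI B x x = hu B" if "x \<in> carrier B" for x using all[OF that that that] unfolding Let_def by blast
  have idem: "hM B x x = x" if "x \<in> carrier B" for x
  proof -
    have "hM B x (hJ B x (hM B x x)) = x" using ab1 that c by blast
    moreover have "hJ B x (hM B x x) = x" using ab2 that by blast
    ultimately show ?thesis by simp
  qed
  interpret slat "carrier B" "hM B" "hu B"
  proof (rule slat.intro)
    show "\<And>x y. x \<in> carrier B \<Longrightarrow> y \<in> carrier B \<Longrightarrow> hM B x y \<in> carrier B" by (rule c)
    show "hu B \<in> carrier B" by (rule c)
    show "\<And>x y w. x \<in> carrier B \<Longrightarrow> y \<in> carrier B \<Longrightarrow> w \<in> carrier B \<Longrightarrow> hM B x (hM B y w) = hM B (hM B x y) w" by (rule as)
    show "\<And>x y. x \<in> carrier B \<Longrightarrow> y \<in> carrier B \<Longrightarrow> hM B x y = hM B y x" by (rule co)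
    show "\<And>x. x \<in> carrier B \<Longrightarrow> hM B x x = x" by (rule idem)
    show "\<And>x. x \<in> carrier B \<Longrightarrow> hM B (hu B) x = x" by (rule tp)
  qed
  interpret isl "carrier B" "hM B" "hu B" "hI B"
    by (rule isl_from_eqs) (rule c E1 E2 E3 E4; assumption)+
  show "heyting_algebra B"
    unfolding heyting_algebra_def Let_def
  proof (rule conjI[OF alg], intro ballI)
    fix x y w assume xyw: "x \<in> carrier B" "y \<in> carrier B" "w \<in> carrier B"
    have r: "le (hM B w x) y = le w (hI B x y)" using res xyw by blast
    show "ops B HMeet [x, ops B HMeet [y, w]] = ops B HMeet [ops B HMeet [x, y], w] \<and>
       ops B HJoin [x, ops B HJoin [y, w]] = ops B HJoin [ops B HJoin [x, y], w] \<and>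
       ops B HMeet [x, y] = ops B HMeet [y, x] \<and>
       ops B HJoin [x, y] = ops B HJoin [y, x] \<and>
       ops B HMeet [x, ops B HJoin [x, y]] = x \<and>
       ops B HJoin [x, ops B HMeet [x, y]] = x \<and>
       ops B HMeet [ops B HBot [], x] = ops B HBot [] \<and>
       ops B HMeet [ops B HTop [], x] = x \<and>
       (ops B HMeet [ops B HMeet [w, x], y] = ops B HMeet [w, x]) = (ops B HMeet [w, ops B HImp [x, y]] = w)"
      using as[OF xyw] jas[OF xyw] co[OF xyw(1,2)] jco[OF xyw(1,2)] ab1[OF xyw(1,2)] ab2[OF xyw(1,2)]
        bo[OF xyw(1)] tp[OF xyw(1)] r
      unfolding hM_def hJ_def hI_def hz_def hu_def le_def by blast
  qed
qed

instance hsym :: countable by countable_datatype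
instance isym :: countable by countable_datatype

definition "im a b = TFn IMeet [a,b]"
definition "ii a b = TFn IImp [a,b]"
definition "itop = TFn ITop []"

definition IEQ :: "(isym trm \<times> isym trm) set" where
  "IEQ = {(im vx (im vy vw), im (im vx vy) vw), (im vx vy, im vy vx), (im vx vx, vx), (im itop vx, vx),
          (im vx (ii vx vy), im vx vy), (im vy (ii vx vy), vy),
          (ii vx (im vy vw), im (ii vx vy) (ii vx vw)), (ii vx vx, itop)}"

lemma IEQ_wf: "wf_eqs iar IEQ"
  unfolding wf_eqs_def IEQ_def vx_def vy_def vw_def im_def ii_def itop_def by auto

lemma ieq_conj:
  "(\<forall>e\<in>IEQ. eval B \<rho> (fst e) = eval B \<rho> (snd e)) \<longleftrightarrow>
   (let x = \<rho> 0; y = \<rho> 1; w = \<rho> 2 in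
    iM B x (iM B y w) = iM B (iM B x y) w \<and> iM B x y = iM B y x \<and> iM B x x = x \<and> iM B (iu B) x = x \<and>
    iM B x (iI B x y) = iM B x y \<and> iM B y (iI B x y) = y \<and>
    iI B x (iM B y w) = iM B (iI B x y) (iI B x w) \<and> iI B x x = iu B)"
  unfolding IEQ_def vx_def vy_def vw_def im_def ii_def itop_def
    iM_def iI_def iu_def Let_def
  by (simp only: ball_simps insert_iff fst_conv snd_conv eval.simps list.map simp_thms)

lemma isl_eqs:
  "implicative_semilattice B \<longleftrightarrow> algebra iar B \<and> (\<forall>e\<in>IEQ. satisfies B e)"
proof
  assume h: "implicative_semilattice B"
  interpret isl "carrier B" "iM B" "iu B" "iI B" using isl_isl[OF h] .
  have alg: "algebra iar B" using h unfolding implicative_semilattice_def by blast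
  have "satisfies B e" if "e \<in> IEQ" for e
    unfolding satisfies_def
  proof (intro allI impI)
    fix \<rho> :: "nat \<Rightarrow> _" assume \<rho>: "\<forall>n. \<rho> n \<in> carrier B"
    have x: "\<rho> 0 \<in> carrier B" "\<rho> 1 \<in> carrier B" "\<rho> 2 \<in> carrier B" using \<rho> by auto
    have "\<forall>e\<in>IEQ. eval B \<rho> (fst e) = eval B \<rho> (snd e)"
      unfolding ieq_conj Let_def
      using assoc[OF x] comm[OF x(1,2)] idem[OF x(1)] top[OF x(1)] H1[OF x(1,2)] H2[OF x(1,2)] H3[OF x] H4[OF x(1)]
      by (intro conjI) (assumption | simp)+
    thus "eval B \<rho> (fst e) = eval B \<rho> (snd e)" using that by blast
  qed
  thus "algebra iar B \<and> (\<forall>e\<in>IEQ. satisfies B e)" using alg by blast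
next
  assume h: "algebra iar B \<and> (\<forall>e\<in>IEQ. satisfies B e)"
  have alg: "algebra iar B" using h by blast
  note c = alg_I[OF alg]
  have all: "let x = x; y = y; w = w in
    iM B x (iM B y w) = iM B (iM B x y) w \<and> iM B x y = iM B y x \<and> iM B x x = x \<and> iM B (iu B) x = x \<and>
    iM B x (iI B x y) = iM B x y \<and> iM B y (iI B x y) = y \<and>
    iI B x (iM B y w) = iM B (iI B x y) (iI B x w) \<and> iI B x x = iu B"
    if xyw: "x \<in> carrier B" "y \<in> carrier B" "w \<in> carrier B" for x y w
  proof -
    have r: "\<forall>n. \<rho>3 x y w n \<in> carrier B" unfolding \<rho>3_def using xyw by auto
    have "\<forall>e\<in>IEQ. eval B (\<rho>3 x y w) (fst e) = eval B (\<rho>3 x y w) (snd e)"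
      using h r unfolding satisfies_def by blast
    note q = ieq_conj[THEN iffD1, OF this]
    have v: "\<rho>3 x y w 0 = x" "\<rho>3 x y w 1 = y" "\<rho>3 x y w 2 = w" unfolding \<rho>3_def by auto
    show ?thesis using q unfolding Let_def v .
  qed
  have as: "iM B x (iM B y w) = iM B (iM B x y) w" if "x \<in> carrier B" "y \<in> carrier B" "w \<in> carrier B" for x y w using all[OF that] unfolding Let_def by blast
  have co: "iM B x y = iM B y x" if "x \<in> carrier B" "y \<in> carrier B" for x y using all[OF that that(1)] unfolding Let_def by blast
  have idem: "iM B x x = x" if "x \<in> carrier B" for x using all[OF that that that] unfolding Let_def by blast
  have tp: "iM B (iu B) x = x" if "x \<in> carrier B" for x using all[OF that that that] unfolding Let_def by blast
  have E1: "iM B x (iI B x y) = iM B x y" if "x \<in> carrier B" "y \<in> carrier B" for x y using all[OF that that(1)] unfolding Let_def by blast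
  have E2: "iM B y (iI B x y) = y" if "x \<in> carrier B" "y \<in> carrier B" for x y using all[OF that that(1)] unfolding Let_def by blast
  have E3: "iI B x (iM B y w) = iM B (iI B x y) (iI B x w)" if "x \<in> carrier B" "y \<in> carrier B" "w \<in> carrier B" for x y w using all[OF that] unfolding Let_def by blast
  have E4: "iI B x x = iu B" if "x \<in> carrier B" for x using all[OF that that that] unfolding Let_def by blast
  interpret slat "carrier B" "iM B" "iu B"
  proof (rule slat.intro)
    show "\<And>x y. x \<in> carrier B \<Longrightarrow> y \<in> carrier B \<Longrightarrow> iM B x y \<in> carrier B" by (rule c)
    show "iu B \<in> carrier B" by (rule c)
    show "\<And>x y w. x \<in> carrier B \<Longrightarrow> y \<in> carrier B \<Longrightarrow> w \<in> carrier B \<Longrightarrow> iM B x (iM B y w) = iM B (iM B x y) w" by (rule as)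
    show "\<And>x y. x \<in> carrier B \<Longrightarrow> y \<in> carrier B \<Longrightarrow> iM B x y = iM B y x" by (rule co)
    show "\<And>x. x \<in> carrier B \<Longrightarrow> iM B x x = x" by (rule idem)
    show "\<And>x. x \<in> carrier B \<Longrightarrow> iM B (iu B) x = x" by (rule tp)
  qed
  interpret isl "carrier B" "iM B" "iu B" "iI B"
    by (rule isl_from_eqs) (rule c E1 E2 E3 E4; assumption)+
  show "implicative_semilattice B"
    unfolding implicative_semilattice_def Let_def
  proof (rule conjI[OF alg], intro ballI)
    fix x y w assume xyw: "x \<in> carrier B" "y \<in> carrier B" "w \<in> carrier B"
    have r: "le (iM B w x) y = le w (iI B x y)" using res xyw by blast
    show "ops B IMeet [x, ops B IMeet [y, w]] = ops B IMeet [ops B IMeet [x, y], w] \<and>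
       ops B IMeet [x, y] = ops B IMeet [y, x] \<and>
       ops B IMeet [x, x] = x \<and>
       ops B IMeet [ops B ITop [], x] = x \<and>
       (ops B IMeet [ops B IMeet [w, x], y] = ops B IMeet [w, x]) = (ops B IMeet [w, ops B IImp [x, y]] = w)"
      using as[OF xyw] co[OF xyw(1,2)] idem[OF xyw(1)] tp[OF xyw(1)] r
      unfolding iM_def iI_def iu_def le_def by blast
  qed
qed

lemma wf_eqs_mem: "wf_eqs ar E \<Longrightarrow> e \<in> E \<Longrightarrow> wf_trm ar (fst e) \<and> wf_trm ar (snd e)"
  unfolding wf_eqs_def by (cases e) auto

lemma HVar_surj:
  assumes wf: "wf_eqs har E" and B: "HVar E B" and h: "hom har \<kappa> B C" and su: "\<kappa> ` carrier B = carrier C"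
  shows "HVar E C"
proof -
  have hB: "heyting_algebra B" and sB: "\<forall>e\<in>E. satisfies B e" using B unfolding HVar_def by auto
  have alg: "algebra har B" and s2: "\<forall>e\<in>HEQ. satisfies B e" using hB heyting_eqs by auto
  have "algebra har C" using alg_surj[OF alg h su] .
  moreover have "\<forall>e\<in>HEQ. satisfies C e"
    using sat_surj[OF alg h su] wf_eqs_mem[OF HEQ_wf] s2 by blast
  ultimately have "heyting_algebra C" using heyting_eqs by blast
  moreover have "\<forall>e\<in>E. satisfies C e"
    using sat_surj[OF alg h su] wf_eqs_mem[OF wf] sB by blast
  ultimately show ?thesis unfolding HVar_def by blast
qed

lemma IVar_surj:
  assumes wf: "wf_eqs iar E" and B: "IVar E B" and h: "hom iar \<kappa> B C" and su: "\<kappa> ` carrier B = carrier C"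
  shows "IVar E C"
proof -
  have hB: "implicative_semilattice B" and sB: "\<forall>e\<in>E. satisfies B e" using B unfolding IVar_def by auto
  have alg: "algebra iar B" and s2: "\<forall>e\<in>IEQ. satisfies B e" using hB isl_eqs by auto
  have "algebra iar C" using alg_surj[OF alg h su] .
  moreover have "\<forall>e\<in>IEQ. satisfies C e"
    using sat_surj[OF alg h su] wf_eqs_mem[OF IEQ_wf] s2 by blast
  ultimately have "implicative_semilattice C" using isl_eqs by blast
  moreover have "\<forall>e\<in>E. satisfies C e"
    using sat_surj[OF alg h su] wf_eqs_mem[OF wf] sB by blast
  ultimately show ?thesis unfolding IVar_def by blast
qed

theorem mainTheorem18:
  fixes EH :: "(hsym trm \<times> hsym trm) set" and EI :: "(isym trm \<times> isym trm) set"
  assumes "wf_eqs har EH" and "wf_eqs iar EI" and "infinite (UNIV :: 'c set)"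
  shows
   "(\<forall>(B :: (hsym, 'b) alg) S. HVar EH B \<and> subalg har S B \<and> S \<noteq> carrier B \<longrightarrow>
       (\<exists>\<theta> \<phi>. congruence har B \<theta> \<and> congruence har B \<phi> \<and> \<theta> \<noteq> \<phi> \<and> restr \<theta> S = restr \<phi> S))
  \<and> (\<forall>(A :: (hsym, 'a) alg) (B :: (hsym, 'b) alg) f.
       HVar EH A \<and> HVar EH B \<and> fin_gen har A \<and> fin_gen har B \<and>
       epi har (HVar EH :: (hsym, 'c) alg \<Rightarrow> bool) f A B \<longrightarrow> f ` carrier A = carrier B)
  \<and> (\<forall>(B :: (isym, 'b) alg) S. IVar EI B \<and> subalg iar S B \<and> S \<noteq> carrier B \<longrightarrow>
       (\<exists>\<theta> \<phi>. congruence iar B \<theta> \<and> congruence iar B \<phi> \<and> \<theta> \<noteq> \<phi> \<and> restr \<theta> S = restr \<phi> S))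
  \<and> (\<forall>(A :: (isym, 'a) alg) (B :: (isym, 'b) alg) f.
       IVar EI A \<and> IVar EI B \<and> fin_gen iar A \<and> fin_gen iar B \<and>
       epi iar (IVar EI :: (isym, 'c) alg \<Rightarrow> bool) f A B \<longrightarrow> f ` carrier A = carrier B)"
proof -
  have P1: "\<forall>(B :: (hsym, 'b) alg) S. HVar EH B \<and> subalg har S B \<and> S \<noteq> carrier B \<longrightarrow>
       (\<exists>\<theta> \<phi>. congruence har B \<theta> \<and> congruence har B \<phi> \<and> \<theta> \<noteq> \<phi> \<and> restr \<theta> S = restr \<phi> S)"
  proof (intro allI impI)
    fix B :: "(hsym, 'b) alg" and S assume a: "HVar EH B \<and> subalg har S B \<and> S \<noteq> carrier B"
    have hA: "heyting_algebra B" using a unfolding HVar_def by blast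
    have alg: "algebra har B" using hA unfolding heyting_algebra_def by blast
    have sub: "subalg har S B" using a by blast
    have S0: "S \<subseteq> carrier B" using sub unfolding subalg_def by blast
    have "sat (Id_on (carrier B)) S \<noteq> carrier B" using sat_Id[OF S0] a by simp
    from part1_H[OF hA Id_cong[OF alg] sub this]
    show "\<exists>\<theta> \<phi>. congruence har B \<theta> \<and> congruence har B \<phi> \<and> \<theta> \<noteq> \<phi> \<and> restr \<theta> S = restr \<phi> S" by blast
  qed
  have P3: "\<forall>(B :: (isym, 'b) alg) S. IVar EI B \<and> subalg iar S B \<and> S \<noteq> carrier B \<longrightarrow>
       (\<exists>\<theta> \<phi>. congruence iar B \<theta> \<and> congruence iar B \<phi> \<and> \<theta> \<noteq> \<phi> \<and> restr \<theta> S = restr \<phi> S)"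
  proof (intro allI impI)
    fix B :: "(isym, 'b) alg" and S assume a: "IVar EI B \<and> subalg iar S B \<and> S \<noteq> carrier B"
    have hA: "implicative_semilattice B" using a unfolding IVar_def by blast
    have alg: "algebra iar B" using hA unfolding implicative_semilattice_def by blast
    have sub: "subalg iar S B" using a by blast
    have S0: "S \<subseteq> carrier B" using sub unfolding subalg_def by blast
    have "sat (Id_on (carrier B)) S \<noteq> carrier B" using sat_Id[OF S0] a by simp
    from part1_I[OF hA Id_cong[OF alg] sub this]
    show "\<exists>\<theta> \<phi>. congruence iar B \<theta> \<and> congruence iar B \<phi> \<and> \<theta> \<noteq> \<phi> \<and> restr \<theta> S = restr \<phi> S" by blast
  qed
  have P2: "\<forall>(A :: (hsym, 'a) alg) (B :: (hsym, 'b) alg) f.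
       HVar EH A \<and> HVar EH B \<and> fin_gen har A \<and> fin_gen har B \<and>
       epi har (HVar EH :: (hsym, 'c) alg \<Rightarrow> bool) f A B \<longrightarrow> f ` carrier A = carrier B"
  proof (intro allI impI)
    fix A :: "(hsym, 'a) alg" and B :: "(hsym, 'b) alg" and f
    assume a: "HVar EH A \<and> HVar EH B \<and> fin_gen har A \<and> fin_gen har B \<and>
       epi har (HVar EH :: (hsym, 'c) alg \<Rightarrow> bool) f A B"
    have hA: "heyting_algebra A" "heyting_algebra B" using a unfolding HVar_def by blast+
    have algA: "algebra har A" and alg: "algebra har B" using hA unfolding heyting_algebra_def by blast+
    show "f ` carrier A = carrier B"
    proof (rule ES_generic[where K="HVar EH :: (hsym, 'c) alg \<Rightarrow> bool"])
      show "algebra har A" by (rule algA)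
      show "algebra har B" by (rule alg)
      show "fin_gen har B" using a by blast
      show "infinite (UNIV :: 'c set)" by (rule assms(3))
      show "epi har (HVar EH :: (hsym, 'c) alg \<Rightarrow> bool) f A B" using a by blast
      show "\<And>(C :: (hsym, 'c) alg) \<kappa>. hom har \<kappa> B C \<Longrightarrow> \<kappa> ` carrier B = carrier C \<Longrightarrow> HVar EH C"
        using HVar_surj[OF assms(1)] a by blast
      show "\<And>\<psi> S. congruence har B \<psi> \<Longrightarrow> subalg har S B \<Longrightarrow> sat \<psi> S \<noteq> carrier B \<Longrightarrow>
        \<exists>\<Theta> \<Phi>. congruence har B \<Theta> \<and> congruence har B \<Phi> \<and> \<psi> \<subseteq> \<Theta> \<and> \<psi> \<subseteq> \<Phi> \<and> \<Theta> \<noteq> \<Phi> \<and> restr \<Theta> S = restr \<Phi> S"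
        using part1_H[OF hA(2)] by blast
    qed
  qed
  have P4: "\<forall>(A :: (isym, 'a) alg) (B :: (isym, 'b) alg) f.
       IVar EI A \<and> IVar EI B \<and> fin_gen iar A \<and> fin_gen iar B \<and>
       epi iar (IVar EI :: (isym, 'c) alg \<Rightarrow> bool) f A B \<longrightarrow> f ` carrier A = carrier B"
  proof (intro allI impI)
    fix A :: "(isym, 'a) alg" and B :: "(isym, 'b) alg" and f
    assume a: "IVar EI A \<and> IVar EI B \<and> fin_gen iar A \<and> fin_gen iar B \<and>
       epi iar (IVar EI :: (isym, 'c) alg \<Rightarrow> bool) f A B"
    have hA: "implicative_semilattice A" "implicative_semilattice B" using a unfolding IVar_def by blast+
    have algA: "algebra iar A" and alg: "algebra iar B" using hA unfolding implicative_semilattice_def by blast+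
    show "f ` carrier A = carrier B"
    proof (rule ES_generic[where K="IVar EI :: (isym, 'c) alg \<Rightarrow> bool"])
      show "algebra iar A" by (rule algA)
      show "algebra iar B" by (rule alg)
      show "fin_gen iar B" using a by blast
      show "infinite (UNIV :: 'c set)" by (rule assms(3))
      show "epi iar (IVar EI :: (isym, 'c) alg \<Rightarrow> bool) f A B" using a by blast
      show "\<And>(C :: (isym, 'c) alg) \<kappa>. hom iar \<kappa> B C \<Longrightarrow> \<kappa> ` carrier B = carrier C \<Longrightarrow> IVar EI C"
        using IVar_surj[OF assms(2)] a by blast
      show "\<And>\<psi> S. congruence iar B \<psi> \<Longrightarrow> subalg iar S B \<Longrightarrow> sat \<psi> S \<noteq> carrier B \<Longrightarrow>
        \<exists>\<Theta> \<Phi>. congruence iar B \<Theta> \<and> congruence iar B \<Phi> \<and> \<psi> \<subseteq> \<Theta> \<and> \<psi> \<subseteq> \<Phi> \<and> \<Theta> \<noteq> \<Phi> \<and> restr \<Theta> S = restr \<Phi> S"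
        using part1_I[OF hA(2)] by blast
    qed
  qed
  show ?thesis using P1 P2 P3 P4 by blast
qed

end
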